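(* Consider the problem $$(\mathrm{CP})\qquad\inf_{\mathbf x\in\mathbb R^n}\{f(\mathbf x): g_i(\mathbf x)\le0,\ i=1,\dots,m\},$$ where $f=s_0+p_0$ and $g_i=s_i+p_i$ ($i=1,\dots,m$) are convex polynomials such that, for each $i=0,1,\dots,m$, $s_i(\mathbf x)=\sum_{j=1}^n u_i^j(x_j)$ with each $u_i^j$ a convex univariate polynomial in $x_j$ of degree at most $2d_j$, and $p_i$ is an SOS-convex polynomial of degree at most $2r$. Let $d_0:=\max_{1\le j\le n}d_j$ and assume $d_0>r$ and that $f$ is bounded from below on the feasible set $\mathbf F=\{\mathbf x: g_i(\mathbf x)\le0,\ i=1,\dots,m\}$. Assume there exists $\widehat{\mathbf x}\in\mathbf F$ with $g_i(\widehat{\mathbf x})<0$ for all $i$. If $\bar{\mathbf y}\in\mathbb R^{s(n,2d_0)}$ is an optimal solution of the problem $(\widetilde{\mathrm D}^{\mathrm{SPLD}}_{\mathrm{sos}})$ defined in the context, then $\bar{\mathbf x}:=(\bar y_{\boldsymbol\alpha})_{|\boldsymbol\alpha|=1}\in\mathbb R^n$ is an optimal solution of $(\mathrm{CP})$.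
   Context: A polynomial is SOS-convex if its Hessian is an SOS matrix polynomial, i.e., $\nabla^2 p(\mathbf x)=F(\mathbf x)^TF(\mathbf x)$ for some matrix polynomial $F$. $\mathbb N^n_d=\{\boldsymbol\alpha\in\mathbb N^n:|\boldsymbol\alpha|\le d\}$; $\lceil\mathbf x\rceil_r=(\mathbf x^{\boldsymbol\alpha})_{\boldsymbol\alpha\in\mathbb N^n_r}$; $s(n,d)=\binom{n+d}{d}$; $\lceil x_j\rceil_{d}=(1,x_j,\dots,x_j^{d})^T$; $(M)_{\boldsymbol\alpha}$ is the coefficient matrix of $\mathbf x^{\boldsymbol\alpha}$ in a polynomial matrix $M$, and $h_{\boldsymbol\alpha}$ the coefficient of $\mathbf x^{\boldsymbol\alpha}$ in a polynomial $h$. $(\widetilde{\mathrm D}^{\mathrm{SPLD}}_{\mathrm{sos}})$: minimize $\sum_{\boldsymbol\alpha\in\mathbb N^n_{2d_0}}f_{\boldsymbol\alpha}y_{\boldsymbol\alpha}$ over $\mathbf y=(y_{\boldsymbol\alpha})_{\boldsymbol\alpha\in\mathbb N^n_{2d_0}}\in\mathbb R^{s(n,2d_0)}$ subject to $\sum_{\boldsymbol\alpha\in\mathbb N^n_{2d_0}}(g_i)_{\boldsymbol\alpha}y_{\boldsymbol\alpha}\le0$, $i=1,\dots,m$; $\sum_{\boldsymbol\alpha\in\mathbb N^n_{2d_0}}y_{\boldsymbol\alpha}(\lceil x_j\rceil_{d_j}\lceil x_j\rceil_{d_j}^T)_{\boldsymbol\alpha}\succeq0$, $j=1,\dots,n$;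 $\sum_{\boldsymbol\alpha\in\mathbb N^n_{2d_0}}y_{\boldsymbol\alpha}(\lceil\mathbf x\rceil_r\lceil\mathbf x\rceil_r^T)_{\boldsymbol\alpha}\succeq0$; $y_{\mathbf 0}=1$. *)

theory Defs
  imports "HOL-Analysis.Analysis" "HOL-Computational_Algebra.Polynomial"
begin

text \<open>Multivariate real polynomials in the variables x_j (j :: 'n, a finite type,
  so that n = CARD('n)) are represented by their coefficient functions
  c :: ('n \<Rightarrow> nat) \<Rightarrow> real (multi-index to coefficient) with finite support.\<close>

type_synonym 'n mpoly_coeffs = "('n \<Rightarrow> nat) \<Rightarrow> real"

definition is_mpoly :: "'n mpoly_coeffs \<Rightarrow> bool" where
  "is_mpoly c \<longleftrightarrow> finite {\<alpha>. c \<alpha> \<noteq> 0}"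

definition mdeg_le :: "'n::finite mpoly_coeffs \<Rightarrow> nat \<Rightarrow> bool" where
  "mdeg_le c D \<longleftrightarrow> (\<forall>\<alpha>. c \<alpha> \<noteq> 0 \<longrightarrow> sum \<alpha> UNIV \<le> D)"

definition mono_set :: "nat \<Rightarrow> ('n::finite \<Rightarrow> nat) set" where
  "mono_set D = {\<alpha>. sum \<alpha> UNIV \<le> D}"

definition monomial_val :: "('n::finite \<Rightarrow> nat) \<Rightarrow> real^'n \<Rightarrow> real" where
  "monomial_val \<alpha> x = (\<Prod>j\<in>UNIV. (x $ j) ^ (\<alpha> j))"

definition peval :: "'n::finite mpoly_coeffs \<Rightarrow> real^'n \<Rightarrow> real" where
  "peval c x = (\<Sum>\<alpha>\<in>{\<alpha>. c \<alpha> \<noteq> 0}. c \<alpha> * monomial_val \<alpha> x)"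

definition pdiff :: "'n \<Rightarrow> 'n mpoly_coeffs \<Rightarrow> 'n mpoly_coeffs" where
  "pdiff k c = (\<lambda>\<alpha>. real (\<alpha> k + 1) * c (\<alpha>(k := \<alpha> k + 1)))"

definition sos_convex :: "'n::finite mpoly_coeffs \<Rightarrow> bool" where
  "sos_convex c \<longleftrightarrow> (\<exists>(q::nat) (F :: nat \<Rightarrow> 'n \<Rightarrow> 'n mpoly_coeffs).
      (\<forall>t<q. \<forall>k. is_mpoly (F t k)) \<and>
      (\<forall>k l x. peval (pdiff k (pdiff l c)) x = (\<Sum>t<q. peval (F t k) x * peval (F t l) x)))"

definition psd_on :: "'i set \<Rightarrow> ('i \<Rightarrow> 'i \<Rightarrow> real) \<Rightarrow> bool" where
  "psd_on I M \<longleftrightarrow> (\<forall>v. 0 \<le> (\<Sum>a\<in>I. \<Sum>b\<in>I. v a * M a b * v b))"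

definition unit_idx :: "'n \<Rightarrow> ('n \<Rightarrow> nat)" where
  "unit_idx j = (\<lambda>k. if k = j then 1 else 0)"

definition pow_idx :: "'n \<Rightarrow> nat \<Rightarrow> ('n \<Rightarrow> nat)" where
  "pow_idx j a = (\<lambda>k. if k = j then a else 0)"

text \<open>Localized moment matrices.
  sum over alpha in N^n_{2 d0} of y_alpha times the coefficient matrix of x^alpha in
  ceil(x_j)_{dj} ceil(x_j)_{dj}^T  (entries indexed by 0..dj, entry (a,b) = x_j^(a+b)).\<close>
definition univ_moment_matrix ::
  "nat \<Rightarrow> (('n::finite \<Rightarrow> nat) \<Rightarrow> real) \<Rightarrow> 'n \<Rightarrow> nat \<Rightarrow> nat \<Rightarrow> real" where
  "univ_moment_matrix D y j a b =
     (\<Sum>\<alpha>\<in>mono_set D. y \<alpha> * (if pow_idx j (a + b) = \<alpha> then 1 else 0))"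

text \<open>sum over alpha in N^n_{D} of y_alpha times the coefficient matrix of x^alpha in
  ceil(x)_r ceil(x)_r^T (entries indexed by beta, gamma in N^n_r, entry = x^(beta+gamma)).\<close>
definition moment_matrix ::
  "nat \<Rightarrow> (('n::finite \<Rightarrow> nat) \<Rightarrow> real) \<Rightarrow> ('n \<Rightarrow> nat) \<Rightarrow> ('n \<Rightarrow> nat) \<Rightarrow> real" where
  "moment_matrix D y \<beta> \<gamma> =
     (\<Sum>\<alpha>\<in>mono_set D. y \<alpha> * (if (\<lambda>k. \<beta> k + \<gamma> k) = \<alpha> then 1 else 0))"

definition lin_fun :: "nat \<Rightarrow> 'n::finite mpoly_coeffs \<Rightarrow> (('n \<Rightarrow> nat) \<Rightarrow> real) \<Rightarrow> real" where
  "lin_fun D h y = (\<Sum>\<alpha>\<in>mono_set D. h \<alpha> * y \<alpha>)"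

definition spld_feasible ::
  "nat \<Rightarrow> nat \<Rightarrow> ('n::finite \<Rightarrow> nat) \<Rightarrow> nat \<Rightarrow> (nat \<Rightarrow> 'n mpoly_coeffs)
     \<Rightarrow> (('n \<Rightarrow> nat) \<Rightarrow> real) \<Rightarrow> bool" where
  "spld_feasible d0 m d r g y \<longleftrightarrow>
     (\<forall>i\<in>{1..m}. lin_fun (2*d0) (g i) y \<le> 0) \<and>
     (\<forall>j. psd_on {0..d j} (univ_moment_matrix (2*d0) y j)) \<and>
     psd_on (mono_set r) (moment_matrix (2*d0) y) \<and>
     y (\<lambda>_. 0) = 1"

definition spld_optimal ::
  "nat \<Rightarrow> nat \<Rightarrow> ('n::finite \<Rightarrow> nat) \<Rightarrow> nat \<Rightarrow> 'n mpoly_coeffs \<Rightarrow> (nat \<Rightarrow> 'n mpoly_coeffs)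
     \<Rightarrow> (('n \<Rightarrow> nat) \<Rightarrow> real) \<Rightarrow> bool" where
  "spld_optimal d0 m d r f g y \<longleftrightarrow>
     spld_feasible d0 m d r g y \<and>
     (\<forall>y'. spld_feasible d0 m d r g y' \<longrightarrow> lin_fun (2*d0) f y \<le> lin_fun (2*d0) f y')"

end

theory Submission
  imports Defs "HOL-Computational_Algebra.Fundamental_Theorem_Algebra"
begin


lemma finite_mono_set: "finite (mono_set D :: ('n::finite \<Rightarrow> nat) set)"
proof -
  have "mono_set D \<subseteq> {f::'n\<Rightarrow>nat. \<forall>x. (x \<in> UNIV \<longrightarrow> f x \<in> {..D}) \<and> (x \<notin> UNIV \<longrightarrow> f x = 0)}"
  proof
    fix \<alpha> :: "'n \<Rightarrow> nat" assume "\<alpha> \<in> mono_set D"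
    hence "sum \<alpha> UNIV \<le> D" by (simp add: mono_set_def)
    moreover have "\<alpha> x \<le> sum \<alpha> UNIV" for x by (rule member_le_sum) auto
    ultimately show "\<alpha> \<in> {f. \<forall>x. (x \<in> UNIV \<longrightarrow> f x \<in> {..D}) \<and> (x \<notin> UNIV \<longrightarrow> f x = 0)}"
      by (auto intro: order_trans)
  qed
  moreover have "finite {f::'n\<Rightarrow>nat. \<forall>x. (x \<in> UNIV \<longrightarrow> f x \<in> {..D}) \<and> (x \<notin> UNIV \<longrightarrow> f x = 0)}"
    by (rule finite_set_of_finite_funs) auto
  ultimately show ?thesis by (rule finite_subset)
qed

lemma mono_set_mono: "D \<le> D' \<Longrightarrow> mono_set D \<subseteq> mono_set D'"
  by (auto simp: mono_set_def)

lemma peval_superset: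
  assumes "finite S" "{\<alpha>. c \<alpha> \<noteq> 0} \<subseteq> S"
  shows "peval c x = (\<Sum>\<alpha>\<in>S. c \<alpha> * monomial_val \<alpha> x)"
  unfolding peval_def by (rule sum.mono_neutral_left) (use assms in auto)

lemma monomial_val_zero_idx[simp]: "monomial_val (\<lambda>_. 0) x = 1"
  by (simp add: monomial_val_def)

lemma monomial_val_add: "monomial_val (\<lambda>k. \<beta> k + \<gamma> k) x = monomial_val \<beta> x * monomial_val \<gamma> x"
  by (simp add: monomial_val_def power_add prod.distrib)

lemma monomial_val_at0: "monomial_val \<alpha> 0 = (if \<alpha> = (\<lambda>_. 0) then 1 else 0)"
proof (cases "\<alpha> = (\<lambda>_. 0)")
  case False
  then obtain k where k: "\<alpha> k \<noteq> 0" by auto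
  have "(\<Prod>j\<in>UNIV. (0::real) ^ \<alpha> j) = 0"
    by (rule prod_zero) (use k in auto)
  then show ?thesis using False by (simp add: monomial_val_def)
qed (simp add: monomial_val_def)

lemma peval_at0: assumes "is_mpoly c" shows "peval c 0 = c (\<lambda>_. 0)"
proof -
  have "peval c 0 = (\<Sum>\<alpha>\<in>insert (\<lambda>_. 0) {\<alpha>. c \<alpha> \<noteq> 0}. c \<alpha> * monomial_val \<alpha> 0)"
    by (rule peval_superset) (use assms in \<open>auto simp: is_mpoly_def\<close>)
  also have "\<dots> = c (\<lambda>_. 0)"
    by (subst sum.remove[of _ "\<lambda>_. 0"]) (use assms in \<open>auto simp: is_mpoly_def monomial_val_at0\<close>)
  finally show ?thesis .
qed



lemma monomial_val_line:
  "monomial_val \<alpha> (a + s *\<^sub>R v) = (\<Prod>j\<in>UNIV. (a$j + s * v$j) ^ \<alpha> j)"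
  by (simp add: monomial_val_def)

lemma monomial_val_dec:
  fixes z :: "real^'n::finite"
  assumes "\<alpha> k > 0"
  shows "monomial_val (\<alpha>(k := \<alpha> k - 1)) z * z$k = monomial_val \<alpha> z"
proof -
  have "monomial_val (\<alpha>(k := \<alpha> k - 1)) z = z$k ^ (\<alpha> k - 1) * (\<Prod>j\<in>UNIV-{k}. z$j ^ \<alpha> j)"
    unfolding monomial_val_def by (subst prod.remove[of _ k]) auto
  moreover have "monomial_val \<alpha> z = z$k ^ \<alpha> k * (\<Prod>j\<in>UNIV-{k}. z$j ^ \<alpha> j)"
    unfolding monomial_val_def by (subst prod.remove[of _ k]) auto
  moreover have "z$k ^ (\<alpha> k - 1) * z$k = z$k ^ \<alpha> k"
    using assms by (cases "\<alpha> k") auto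
  ultimately show ?thesis by (simp add: mult_ac)
qed

lemma monomial_line_deriv:
  fixes a v :: "real^'n::finite"
  shows "((\<lambda>s. monomial_val \<alpha> (a + s *\<^sub>R v)) has_real_derivative
     (\<Sum>k\<in>UNIV. v$k * (real (\<alpha> k) * monomial_val (\<alpha>(k := \<alpha> k - 1)) (a + s *\<^sub>R v)))) (at s)"
proof -
  let ?z = "a + s *\<^sub>R v"
  have d: "((\<lambda>s. (a$j + s * v$j) ^ \<alpha> j) has_real_derivative
            real (\<alpha> j) * (a$j + s * v$j) ^ (\<alpha> j - 1) * v$j) (at s)" for j
    by (auto intro!: derivative_eq_intros)
  have D: "((\<lambda>s. \<Prod>j\<in>UNIV. (a$j + s * v$j) ^ \<alpha> j) has_real_derivative
     (\<Sum>k\<in>UNIV. real (\<alpha> k) * (a$k + s * v$k) ^ (\<alpha> k - 1) * v$k *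
        (\<Prod>j\<in>UNIV-{k}. (a$j + s * v$j) ^ \<alpha> j))) (at s)"
    by (rule has_field_derivative_prod[where f="\<lambda>j s. (a$j + s * v$j) ^ \<alpha> j"]) (rule d)
  have K: "real (\<alpha> k) * (a$k + s * v$k) ^ (\<alpha> k - 1) * v$k *
        (\<Prod>j\<in>UNIV-{k}. (a$j + s * v$j) ^ \<alpha> j) =
      v$k * (real (\<alpha> k) * monomial_val (\<alpha>(k := \<alpha> k - 1)) ?z)" for k
  proof -
    have "monomial_val (\<alpha>(k := \<alpha> k - 1)) ?z = (a$k + s * v$k) ^ (\<alpha> k - 1) * (\<Prod>j\<in>UNIV-{k}. (a$j + s * v$j) ^ \<alpha> j)"
      unfolding monomial_val_def by (subst prod.remove[of _ k]) auto
    then show ?thesis by (simp add: mult_ac)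
  qed
  have eq: "(\<Sum>k\<in>UNIV. real (\<alpha> k) * (a$k + s * v$k) ^ (\<alpha> k - 1) * v$k *
        (\<Prod>j\<in>UNIV-{k}. (a$j + s * v$j) ^ \<alpha> j)) =
      (\<Sum>k\<in>UNIV. v$k * (real (\<alpha> k) * monomial_val (\<alpha>(k := \<alpha> k - 1)) ?z))"
    by (rule sum.cong[OF refl]) (rule K)
  have F: "(\<lambda>s. monomial_val \<alpha> (a + s *\<^sub>R v)) = (\<lambda>s. \<Prod>j\<in>UNIV. (a$j + s * v$j) ^ \<alpha> j)"
    by (simp add: monomial_val_line)
  show ?thesis using D unfolding eq F .
qed

definition incr_idx :: "'n \<Rightarrow> ('n \<Rightarrow> nat) \<Rightarrow> ('n \<Rightarrow> nat)" where
  "incr_idx k \<beta> = \<beta>(k := \<beta> k + 1)"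
definition decr_idx :: "'n \<Rightarrow> ('n \<Rightarrow> nat) \<Rightarrow> ('n \<Rightarrow> nat)" where
  "decr_idx k \<alpha> = \<alpha>(k := \<alpha> k - 1)"

lemma supp_pdiff_sub:
  "{\<beta>. pdiff k c \<beta> \<noteq> 0} \<subseteq> decr_idx k ` {\<alpha>. c \<alpha> \<noteq> 0 \<and> 0 < \<alpha> k}"
proof
  fix \<beta> assume "\<beta> \<in> {\<beta>. pdiff k c \<beta> \<noteq> 0}"
  hence "c (incr_idx k \<beta>) \<noteq> 0" by (auto simp: pdiff_def incr_idx_def)
  moreover have "decr_idx k (incr_idx k \<beta>) = \<beta>" by (auto simp: decr_idx_def incr_idx_def)
  ultimately show "\<beta> \<in> decr_idx k ` {\<alpha>. c \<alpha> \<noteq> 0 \<and> 0 < \<alpha> k}"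
    by (intro image_eqI[of _ _ "incr_idx k \<beta>"]) (auto simp: incr_idx_def)
qed

lemma is_mpoly_pdiff: "is_mpoly c \<Longrightarrow> is_mpoly (pdiff k c)"
  unfolding is_mpoly_def
  by (rule finite_subset[OF supp_pdiff_sub]) auto

lemma peval_pdiff:
  assumes "is_mpoly c"
  shows "peval (pdiff k c) x =
    (\<Sum>\<alpha>\<in>{\<alpha>. c \<alpha> \<noteq> 0}. c \<alpha> * (real (\<alpha> k) * monomial_val (\<alpha>(k := \<alpha> k - 1)) x))"
proof -
  let ?S = "{\<alpha>. c \<alpha> \<noteq> 0 \<and> 0 < \<alpha> k}"
  have fS: "finite ?S" using assms by (auto simp: is_mpoly_def)
  have inj: "inj_on (decr_idx k) ?S"
  proof (rule inj_onI)
    fix x y assume "x \<in> ?S" "y \<in> ?S" "decr_idx k x = decr_idx k y"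
    show "x = y"
    proof
      fix j
      have "decr_idx k x j = decr_idx k y j" using \<open>decr_idx k x = decr_idx k y\<close> by simp
      then show "x j = y j" using \<open>x \<in> ?S\<close> \<open>y \<in> ?S\<close> by (cases "j = k") (auto simp: decr_idx_def)
    qed
  qed
  have "peval (pdiff k c) x = (\<Sum>\<beta>\<in>decr_idx k ` ?S. pdiff k c \<beta> * monomial_val \<beta> x)"
    by (rule peval_superset) (use fS supp_pdiff_sub[of k c] in auto)
  also have "\<dots> = (\<Sum>\<alpha>\<in>?S. pdiff k c (decr_idx k \<alpha>) * monomial_val (decr_idx k \<alpha>) x)"
    by (rule sum.reindex[OF inj, unfolded comp_def])
  also have "\<dots> = (\<Sum>\<alpha>\<in>?S. c \<alpha> * (real (\<alpha> k) * monomial_val (\<alpha>(k := \<alpha> k - 1)) x))"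
  proof (rule sum.cong[OF refl])
    fix \<alpha> assume "\<alpha> \<in> ?S"
    hence e1: "(decr_idx k \<alpha>)(k := decr_idx k \<alpha> k + 1) = \<alpha>" and e2: "decr_idx k \<alpha> k + 1 = \<alpha> k"
      by (auto simp: decr_idx_def)
    show "pdiff k c (decr_idx k \<alpha>) * monomial_val (decr_idx k \<alpha>) x =
        c \<alpha> * (real (\<alpha> k) * monomial_val (\<alpha>(k := \<alpha> k - 1)) x)"
      unfolding pdiff_def e1 e2 by (simp add: decr_idx_def)
  qed
  also have "\<dots> = (\<Sum>\<alpha>\<in>{\<alpha>. c \<alpha> \<noteq> 0}. c \<alpha> * (real (\<alpha> k) * monomial_val (\<alpha>(k := \<alpha> k - 1)) x))"
    by (rule sum.mono_neutral_left) (use assms in \<open>auto simp: is_mpoly_def\<close>)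
  finally show ?thesis .
qed

lemma peval_line_deriv:
  fixes a v :: "real^'n::finite"
  assumes "is_mpoly c"
  shows "((\<lambda>s. peval c (a + s *\<^sub>R v)) has_real_derivative
     (\<Sum>k\<in>UNIV. v$k * peval (pdiff k c) (a + s *\<^sub>R v))) (at s)"
proof -
  let ?z = "a + s *\<^sub>R v"
  let ?S = "{\<alpha>. c \<alpha> \<noteq> 0}"
  have "((\<lambda>s. \<Sum>\<alpha>\<in>?S. c \<alpha> * monomial_val \<alpha> (a + s *\<^sub>R v)) has_real_derivative
     (\<Sum>\<alpha>\<in>?S. c \<alpha> * (\<Sum>k\<in>UNIV. v$k * (real (\<alpha> k) * monomial_val (\<alpha>(k := \<alpha> k - 1)) ?z)))) (at s)"
    by (intro DERIV_sum DERIV_cmult monomial_line_deriv)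
  moreover have "(\<Sum>\<alpha>\<in>?S. c \<alpha> * (\<Sum>k\<in>UNIV. v$k * (real (\<alpha> k) * monomial_val (\<alpha>(k := \<alpha> k - 1)) ?z)))
      = (\<Sum>k\<in>UNIV. v$k * peval (pdiff k c) ?z)"
  proof -
    have "(\<Sum>\<alpha>\<in>?S. c \<alpha> * (\<Sum>k\<in>UNIV. v$k * (real (\<alpha> k) * monomial_val (\<alpha>(k := \<alpha> k - 1)) ?z)))
       = (\<Sum>\<alpha>\<in>?S. \<Sum>k\<in>UNIV. v$k * (c \<alpha> * (real (\<alpha> k) * monomial_val (\<alpha>(k := \<alpha> k - 1)) ?z)))"
      by (simp add: sum_distrib_left mult.left_commute)
    also have "\<dots> = (\<Sum>k\<in>UNIV. \<Sum>\<alpha>\<in>?S. v$k * (c \<alpha> * (real (\<alpha> k) * monomial_val (\<alpha>(k := \<alpha> k - 1)) ?z)))"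
      by (rule sum.swap)
    also have "\<dots> = (\<Sum>k\<in>UNIV. v$k * peval (pdiff k c) ?z)"
      by (simp add: peval_pdiff[OF assms] sum_distrib_left)
    finally show ?thesis .
  qed
  ultimately show ?thesis unfolding peval_def by simp
qed



lemma sum_upd_UNIV: "sum (\<beta>(k := v)) (UNIV::'n::finite set) + \<beta> k = sum \<beta> UNIV + (v::nat)"
proof -
  have "sum (\<beta>(k := v)) UNIV = v + sum \<beta> (UNIV - {k})"
    by (subst sum.remove[of _ k]) (auto intro: sum.cong)
  moreover have "sum \<beta> UNIV = \<beta> k + sum \<beta> (UNIV - {k})"
    by (subst sum.remove[of _ k]) auto
  ultimately show ?thesis by simp
qed

lemma mdeg_le_pdiff: "mdeg_le c (Suc D) \<Longrightarrow> mdeg_le (pdiff k c) D"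
  unfolding mdeg_le_def
proof (intro allI impI)
  fix \<beta> assume A: "\<forall>\<alpha>. c \<alpha> \<noteq> 0 \<longrightarrow> sum \<alpha> UNIV \<le> Suc D" and "pdiff k c \<beta> \<noteq> 0"
  hence "c (\<beta>(k := \<beta> k + 1)) \<noteq> 0" by (auto simp: pdiff_def)
  with A have "sum (\<beta>(k := \<beta> k + 1)) UNIV \<le> Suc D" by blast
  with sum_upd_UNIV[of \<beta> k "\<beta> k + 1"] show "sum \<beta> UNIV \<le> D" by simp
qed

lemma is_mpoly_mdeg: "is_mpoly c \<Longrightarrow> \<exists>D. mdeg_le c D"
  unfolding is_mpoly_def mdeg_le_def
  by (rule exI[of _ "Max ((\<lambda>\<alpha>. sum \<alpha> UNIV) ` {\<alpha>. c \<alpha> \<noteq> 0})"]) auto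

lemma peval_pdiff_zero:
  assumes "is_mpoly c" "\<forall>x. peval c x = 0"
  shows "peval (pdiff k c) x = 0"
proof -
  let ?v = "axis k (1::real)"
  have "((\<lambda>s. peval c (x + s *\<^sub>R ?v)) has_real_derivative
     (\<Sum>j\<in>UNIV. ?v$j * peval (pdiff j c) (x + 0 *\<^sub>R ?v))) (at 0)"
    by (rule peval_line_deriv[OF assms(1)])
  moreover have "(\<Sum>j\<in>UNIV. ?v$j * peval (pdiff j c) (x + 0 *\<^sub>R ?v)) = peval (pdiff k c) x"
  proof -
    have "(\<Sum>j\<in>UNIV. ?v$j * peval (pdiff j c) (x + 0 *\<^sub>R ?v)) = (\<Sum>j\<in>UNIV. (if j = k then peval (pdiff j c) x else 0))"
      by (rule sum.cong) (auto simp: axis_def)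
    also have "\<dots> = peval (pdiff k c) x" by simp
    finally show ?thesis .
  qed
  moreover have "((\<lambda>s. peval c (x + s *\<^sub>R ?v)) has_real_derivative 0) (at 0)"
    using assms(2) by simp
  ultimately show ?thesis using DERIV_unique by metis
qed

lemma mpoly_unique_aux:
  "mdeg_le c D \<Longrightarrow> is_mpoly c \<Longrightarrow> \<forall>x. peval c x = 0 \<Longrightarrow> c = (\<lambda>_. 0)"
proof (induction D arbitrary: c)
  case 0
  have c0: "c (\<lambda>_. 0) = 0" using peval_at0[OF 0(2)] 0(3) by simp
  show ?case
  proof
    fix \<alpha>
    show "c \<alpha> = 0"
    proof (rule ccontr)
      assume "c \<alpha> \<noteq> 0"
      with 0(1) have "sum \<alpha> UNIV = 0" by (auto simp: mdeg_le_def)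
      hence "\<alpha> = (\<lambda>_. 0)" by auto
      with c0 \<open>c \<alpha> \<noteq> 0\<close> show False by simp
    qed
  qed
next
  case (Suc D)
  have pd: "pdiff k c = (\<lambda>_. 0)" for k
    using Suc.IH[OF mdeg_le_pdiff[OF Suc(2)] is_mpoly_pdiff[OF Suc(3)]]
      peval_pdiff_zero[OF Suc(3) Suc(4)] by blast
  have c0: "c (\<lambda>_. 0) = 0" using peval_at0[OF Suc(3)] Suc(4) by simp
  show ?case
  proof
    fix \<alpha>
    show "c \<alpha> = 0"
    proof (cases "\<alpha> = (\<lambda>_. 0)")
      case True then show ?thesis using c0 by simp
    next
      case False
      then obtain k where k: "\<alpha> k > 0" by (metis gr0I)
      have "(\<alpha>(k := \<alpha> k - 1))(k := (\<alpha>(k := \<alpha> k - 1)) k + 1) = \<alpha>" using k by auto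
      moreover have "pdiff k c (\<alpha>(k := \<alpha> k - 1)) = 0" using pd by simp
      ultimately have "real (\<alpha> k) * c \<alpha> = 0" unfolding pdiff_def using k by simp
      then show ?thesis using k by simp
    qed
  qed
qed

lemma mpoly_unique: "is_mpoly c \<Longrightarrow> \<forall>x. peval c x = 0 \<Longrightarrow> c = (\<lambda>_. 0)"
  using is_mpoly_mdeg mpoly_unique_aux by blast



definition pfun :: "nat \<Rightarrow> (('n::finite \<Rightarrow> nat) \<Rightarrow> real) \<Rightarrow> real^'n \<Rightarrow> real" where
  "pfun D c x = (\<Sum>\<alpha>\<in>mono_set D. c \<alpha> * monomial_val \<alpha> x)"

definition pf :: "nat \<Rightarrow> (real^'n::finite \<Rightarrow> real) \<Rightarrow> bool" where
  "pf D \<phi> \<longleftrightarrow> (\<exists>c. \<phi> = pfun D c)"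

definition Lam :: "nat \<Rightarrow> (('n::finite \<Rightarrow> nat) \<Rightarrow> real) \<Rightarrow> (real^'n \<Rightarrow> real) \<Rightarrow> real" where
  "Lam D y \<phi> = lin_fun D (SOME c. \<phi> = pfun D c) y"

lemma pfun_unique:
  assumes "pfun D c = pfun D c'" "\<alpha> \<in> mono_set D"
  shows "c \<alpha> = c' \<alpha>"
proof -
  let ?e = "\<lambda>\<alpha>. if \<alpha> \<in> mono_set D then c \<alpha> - c' \<alpha> else 0"
  have m: "is_mpoly ?e" unfolding is_mpoly_def
    by (rule finite_subset[OF _ finite_mono_set[of D]]) auto
  have "peval ?e x = 0" for x
  proof -
    have "peval ?e x = (\<Sum>\<alpha>\<in>mono_set D. ?e \<alpha> * monomial_val \<alpha> x)"
      by (rule peval_superset) (auto simp: finite_mono_set)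
    also have "\<dots> = pfun D c x - pfun D c' x"
      by (simp add: pfun_def sum_subtractf[symmetric] algebra_simps)
    finally show ?thesis using assms(1) by simp
  qed
  then have "?e = (\<lambda>_. 0)" using mpoly_unique[OF m] by blast
  then show ?thesis using fun_cong[of ?e "\<lambda>_. 0" \<alpha>] assms(2) by simp
qed

lemma Lam_pfun: "Lam D y (pfun D c) = lin_fun D c y"
proof -
  have "pfun D c = pfun D (SOME c'. pfun D c = pfun D c')" by (rule someI[of _ c]) (rule refl)
  then have "\<forall>\<alpha>\<in>mono_set D. (SOME c'. pfun D c = pfun D c') \<alpha> = c \<alpha>"
    using pfun_unique by metis
  then show ?thesis unfolding Lam_def lin_fun_def by (intro sum.cong) auto
qed

lemma pfun_add: "(\<lambda>x. pfun D c x + pfun D c' x) = pfun D (\<lambda>\<alpha>. c \<alpha> + c' \<alpha>)"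
  by (auto simp: pfun_def sum.distrib algebra_simps)

lemma pfun_scale: "(\<lambda>x. k * pfun D c x) = pfun D (\<lambda>\<alpha>. k * c \<alpha>)"
  by (auto simp: pfun_def sum_distrib_left algebra_simps)

lemma pfun_zero: "(\<lambda>x. 0) = pfun D (\<lambda>_. 0)"
  by (auto simp: pfun_def)

lemma pfun_delta:
  assumes "\<beta> \<in> mono_set D"
  shows "pfun D (\<lambda>\<alpha>. if \<alpha> = \<beta> then k else 0) = (\<lambda>x. k * monomial_val \<beta> x)"
proof
  fix x
  have "(\<Sum>\<alpha>\<in>mono_set D. (if \<alpha> = \<beta> then k else 0) * monomial_val \<alpha> x)
      = (\<Sum>\<alpha>\<in>mono_set D. if \<alpha> = \<beta> then k * monomial_val \<beta> x else 0)"
    by (rule sum.cong) auto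
  also have "\<dots> = k * monomial_val \<beta> x"
    by (rule trans[OF sum.delta[OF finite_mono_set]]) (use assms in simp)
  finally show "pfun D (\<lambda>\<alpha>. if \<alpha> = \<beta> then k else 0) x = k * monomial_val \<beta> x"
    unfolding pfun_def .
qed

lemma zero_in_mono_set[simp]: "(\<lambda>_. 0) \<in> mono_set D"
  by (simp add: mono_set_def)

lemma unit_idx_mono_set: "1 \<le> D \<Longrightarrow> unit_idx k \<in> mono_set D"
  by (simp add: mono_set_def unit_idx_def)

lemma monomial_val_unit: "monomial_val (unit_idx k) x = x$k"
proof -
  have "monomial_val (unit_idx k) x = (\<Prod>j\<in>UNIV. if j = k then x$j else 1)"
    unfolding monomial_val_def unit_idx_def by (intro prod.cong) auto
  also have "\<dots> = x$k" by (simp add: prod.delta)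
  finally show ?thesis .
qed

lemma mono_set_add:
  "\<alpha> \<in> mono_set D1 \<Longrightarrow> \<beta> \<in> mono_set D2 \<Longrightarrow> (\<lambda>k. \<alpha> k + \<beta> k) \<in> mono_set (D1 + D2)"
  by (simp add: mono_set_def sum.distrib add_mono)

lemma pf_pfun[simp]: "pf D (pfun D c)"
  by (auto simp: pf_def)

lemma pf_add: "pf D \<phi> \<Longrightarrow> pf D \<psi> \<Longrightarrow> pf D (\<lambda>x. \<phi> x + \<psi> x)"
  unfolding pf_def using pfun_add by metis

lemma pf_scale: "pf D \<phi> \<Longrightarrow> pf D (\<lambda>x. k * \<phi> x)"
  unfolding pf_def using pfun_scale by metis

lemma pf_zero: "pf D (\<lambda>x. 0)"
  unfolding pf_def using pfun_zero by metis

lemma pf_diff: "pf D \<phi> \<Longrightarrow> pf D \<psi> \<Longrightarrow> pf D (\<lambda>x. \<phi> x - \<psi> x)"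
  using pf_add[of D \<phi> "\<lambda>x. (-1) * \<psi> x"] pf_scale[of D \<psi> "-1"] by simp

lemma pf_sum: "finite I \<Longrightarrow> (\<And>i. i \<in> I \<Longrightarrow> pf D (\<phi> i)) \<Longrightarrow> pf D (\<lambda>x. \<Sum>i\<in>I. \<phi> i x)"
  by (induction I rule: finite_induct) (auto intro: pf_zero pf_add)

lemma pf_mon: "\<beta> \<in> mono_set D \<Longrightarrow> pf D (monomial_val \<beta>)"
  unfolding pf_def by (rule exI[of _ "\<lambda>\<alpha>. if \<alpha> = \<beta> then 1 else 0"]) (simp add: pfun_delta)

lemma pf_const: "pf D (\<lambda>x. k)"
  unfolding pf_def by (rule exI[of _ "\<lambda>\<alpha>. if \<alpha> = (\<lambda>_. 0) then k else 0"]) (simp add: pfun_delta)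

lemma pf_coord: "pf D (\<lambda>x. x$k)" if "1 \<le> D"
proof -
  have "monomial_val (unit_idx k) = (\<lambda>x. x$k)" by (rule ext) (simp add: monomial_val_unit)
  then show ?thesis using pf_mon[OF unit_idx_mono_set, of D k] that by simp
qed

lemma pf_mono:
  assumes "pf D \<phi>" "D \<le> D'"
  shows "pf D' \<phi>"
proof -
  obtain c where c: "\<phi> = pfun D c" using assms(1) by (auto simp: pf_def)
  have "pfun D c = pfun D' (\<lambda>\<alpha>. if \<alpha> \<in> mono_set D then c \<alpha> else 0)"
    unfolding pfun_def
    by (intro ext sum.mono_neutral_cong_left finite_mono_set mono_set_mono[OF assms(2)]) auto
  then show ?thesis using c by (auto simp: pf_def)
qed

lemma pf_mult:
  assumes "pf D1 \<phi>" "pf D2 \<psi>"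
  shows "pf (D1 + D2) (\<lambda>x. \<phi> x * \<psi> x)"
proof -
  obtain c where c: "\<phi> = pfun D1 c" using assms(1) by (auto simp: pf_def)
  obtain c' where c': "\<psi> = pfun D2 c'" using assms(2) by (auto simp: pf_def)
  have "(\<lambda>x. \<phi> x * \<psi> x) = (\<lambda>x. \<Sum>\<alpha>\<in>mono_set D1. \<Sum>\<beta>\<in>mono_set D2.
          (c \<alpha> * c' \<beta>) * monomial_val (\<lambda>k. \<alpha> k + \<beta> k) x)"
    by (simp add: c c' pfun_def sum_distrib_left sum_distrib_right monomial_val_add mult_ac)
  moreover have "pf (D1 + D2) (\<lambda>x. \<Sum>\<alpha>\<in>mono_set D1. \<Sum>\<beta>\<in>mono_set D2.
          (c \<alpha> * c' \<beta>) * monomial_val (\<lambda>k. \<alpha> k + \<beta> k) x)"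
    by (intro pf_sum pf_scale pf_mon mono_set_add finite_mono_set)
  ultimately show ?thesis by simp
qed

lemma pf_prod:
  "finite I \<Longrightarrow> (\<And>i. i \<in> I \<Longrightarrow> pf (D i) (\<phi> i)) \<Longrightarrow> pf (\<Sum>i\<in>I. D i) (\<lambda>x. \<Prod>i\<in>I. \<phi> i x)"
proof (induction I rule: finite_induct)
  case empty then show ?case by (simp add: pf_const)
next
  case (insert i I)
  then show ?case by (simp add: pf_mult)
qed

lemma pf_power: "pf D \<phi> \<Longrightarrow> pf (n * D) (\<lambda>x. \<phi> x ^ n)"
proof (induction n)
  case 0 then show ?case by (simp add: pf_const)
next
  case (Suc n)
  then show ?case using pf_mult[of D \<phi> "n * D" "\<lambda>x. \<phi> x ^ n"] by (simp add: add.commute)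
qed

lemma peval_eq_pfun:
  assumes "is_mpoly c" "mdeg_le c D"
  shows "peval c = pfun D c"
proof
  fix x
  show "peval c x = pfun D c x"
    unfolding pfun_def
    by (rule peval_superset[OF finite_mono_set]) (use assms in \<open>auto simp: mdeg_le_def mono_set_def\<close>)
qed

lemma pf_peval: "is_mpoly c \<Longrightarrow> mdeg_le c D \<Longrightarrow> pf D (peval c)"
  using peval_eq_pfun by (metis pf_pfun)

lemma pf_peval_ex: "is_mpoly c \<Longrightarrow> \<exists>D. pf D (peval c)"
  using is_mpoly_mdeg pf_peval by blast

lemma pf_comp_affine:
  fixes a :: "real^'n::finite"
  assumes "pf D \<phi>"
  shows "pf D (\<lambda>x. \<phi> (a + s *\<^sub>R (x - a)))"
proof -
  obtain c where c: "\<phi> = pfun D c" using assms by (auto simp: pf_def)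
  have lin: "pf 1 (\<lambda>x. a$j + s * (x$j - a$j))" for j
    by (intro pf_add pf_const pf_scale pf_diff pf_coord) auto
  have mon: "pf D (\<lambda>x. monomial_val \<alpha> (a + s *\<^sub>R (x - a)))" if "\<alpha> \<in> mono_set D" for \<alpha>
  proof -
    have "pf (\<Sum>j\<in>UNIV. \<alpha> j * 1) (\<lambda>x. \<Prod>j\<in>UNIV. (a$j + s * (x$j - a$j)) ^ \<alpha> j)"
      by (intro pf_prod pf_power lin) auto
    then have "pf (sum \<alpha> UNIV) (\<lambda>x. monomial_val \<alpha> (a + s *\<^sub>R (x - a)))"
      by (simp add: monomial_val_def)
    then show ?thesis by (rule pf_mono) (use that in \<open>simp add: mono_set_def\<close>)
  qed
  have "(\<lambda>x. \<phi> (a + s *\<^sub>R (x - a))) = (\<lambda>x. \<Sum>\<alpha>\<in>mono_set D. c \<alpha> * monomial_val \<alpha> (a + s *\<^sub>R (x - a)))"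
    by (simp add: c pfun_def)
  moreover have "pf D \<dots>" by (intro pf_sum pf_scale mon finite_mono_set)
  ultimately show ?thesis by simp
qed

lemma Lam_add:
  assumes "pf D \<phi>" "pf D \<psi>"
  shows "Lam D y (\<lambda>x. \<phi> x + \<psi> x) = Lam D y \<phi> + Lam D y \<psi>"
proof -
  obtain c where c: "\<phi> = pfun D c" using assms(1) by (auto simp: pf_def)
  obtain c' where c': "\<psi> = pfun D c'" using assms(2) by (auto simp: pf_def)
  show ?thesis unfolding c c' pfun_add Lam_pfun
    by (simp add: lin_fun_def sum.distrib algebra_simps)
qed

lemma Lam_scale:
  assumes "pf D \<phi>"
  shows "Lam D y (\<lambda>x. k * \<phi> x) = k * Lam D y \<phi>"
proof -
  obtain c where c: "\<phi> = pfun D c" using assms(1) by (auto simp: pf_def)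
  show ?thesis unfolding c pfun_scale Lam_pfun
    by (simp add: lin_fun_def sum_distrib_left algebra_simps)
qed

lemma Lam_zero: "Lam D y (\<lambda>x. 0) = 0"
  unfolding pfun_zero[of D] Lam_pfun by (simp add: lin_fun_def)

lemma Lam_diff:
  assumes "pf D \<phi>" "pf D \<psi>"
  shows "Lam D y (\<lambda>x. \<phi> x - \<psi> x) = Lam D y \<phi> - Lam D y \<psi>"
  using Lam_add[OF assms(1) pf_scale[OF assms(2), of "-1"], of y] Lam_scale[OF assms(2), of y "-1"]
  by simp

lemma Lam_sum:
  "finite I \<Longrightarrow> (\<And>i. i \<in> I \<Longrightarrow> pf D (\<phi> i)) \<Longrightarrow>
     Lam D y (\<lambda>x. \<Sum>i\<in>I. \<phi> i x) = (\<Sum>i\<in>I. Lam D y (\<phi> i))"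
proof (induction I rule: finite_induct)
  case empty then show ?case by (simp add: Lam_zero)
next
  case (insert i I)
  have "Lam D y (\<lambda>x. \<Sum>i\<in>insert i I. \<phi> i x) = Lam D y (\<lambda>x. \<phi> i x + (\<Sum>i\<in>I. \<phi> i x))"
    using insert.hyps by simp
  also have "\<dots> = Lam D y (\<phi> i) + Lam D y (\<lambda>x. \<Sum>i\<in>I. \<phi> i x)"
  proof -
    have "pf D (\<lambda>x. \<Sum>i\<in>I. \<phi> i x)" by (rule pf_sum) (use insert in auto)
    then show ?thesis using Lam_add[of D "\<phi> i" "\<lambda>x. \<Sum>i\<in>I. \<phi> i x" y] insert.prems by auto
  qed
  finally show ?case using insert by simp
qed

lemma lin_fun_delta:
  assumes "\<beta> \<in> mono_set D"
  shows "lin_fun D (\<lambda>\<alpha>. if \<alpha> = \<beta> then k else 0) y = k * y \<beta>"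
proof -
  have "lin_fun D (\<lambda>\<alpha>. if \<alpha> = \<beta> then k else 0) y = (\<Sum>\<alpha>\<in>mono_set D. if \<alpha> = \<beta> then k * y \<beta> else 0)"
    unfolding lin_fun_def by (rule sum.cong) auto
  also have "\<dots> = k * y \<beta>"
    by (rule trans[OF sum.delta[OF finite_mono_set]]) (use assms in simp)
  finally show ?thesis .
qed

lemma Lam_mon:
  assumes "\<beta> \<in> mono_set D"
  shows "Lam D y (monomial_val \<beta>) = y \<beta>"
proof -
  have "monomial_val \<beta> = pfun D (\<lambda>\<alpha>. if \<alpha> = \<beta> then 1 else 0)"
    using pfun_delta[OF assms, where k=1] by simp
  then show ?thesis using Lam_pfun[of D y "\<lambda>\<alpha>. if \<alpha> = \<beta> then 1 else 0"] lin_fun_delta[OF assms, where k=1 and y=y] by simp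
qed

lemma Lam_const: "Lam D y (\<lambda>x. k) = k * y (\<lambda>_. 0)"
proof -
  have e: "pfun D (\<lambda>\<alpha>. if \<alpha> = (\<lambda>_. 0) then k else 0) = (\<lambda>x. k)"
    using pfun_delta[OF zero_in_mono_set, where k=k and D=D] by simp
  have "Lam D y (\<lambda>x. k) = Lam D y (pfun D (\<lambda>\<alpha>. if \<alpha> = (\<lambda>_. 0) then k else 0))"
    by (simp only: e)
  also have "\<dots> = lin_fun D (\<lambda>\<alpha>. if \<alpha> = (\<lambda>_. 0) then k else 0) y" by (rule Lam_pfun)
  also have "\<dots> = k * y (\<lambda>_. 0)" by (rule lin_fun_delta) simp
  finally show ?thesis .
qed

lemma Lam_coord: "Lam D y (\<lambda>x. x$k) = y (unit_idx k)" if "1 \<le> D"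
proof -
  have "monomial_val (unit_idx k) = (\<lambda>x. x$k)" by (rule ext) (simp add: monomial_val_unit)
  then show ?thesis using Lam_mon[OF unit_idx_mono_set[OF that, where k=k], where y=y] by simp
qed

lemma Lam_peval: "is_mpoly c \<Longrightarrow> mdeg_le c D \<Longrightarrow> Lam D y (peval c) = lin_fun D c y"
  using peval_eq_pfun Lam_pfun by metis

lemma supp_bound:
  assumes "is_mpoly c" "pf D (peval c)"
  shows "mdeg_le c D"
proof -
  obtain D' where D': "mdeg_le c D'" using is_mpoly_mdeg[OF assms(1)] by blast
  obtain c' where c': "peval c = pfun D c'" using assms(2) by (auto simp: pf_def)
  let ?M = "max D D'"
  have e1: "peval c = pfun ?M c" using peval_eq_pfun[OF assms(1)] D'
    by (metis max.cobounded2 mdeg_le_def order_trans)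
  have "pfun D c' = pfun ?M (\<lambda>\<alpha>. if \<alpha> \<in> mono_set D then c' \<alpha> else 0)"
    unfolding pfun_def
    by (intro ext sum.mono_neutral_cong_left finite_mono_set mono_set_mono) auto
  with e1 c' have eq: "pfun ?M c = pfun ?M (\<lambda>\<alpha>. if \<alpha> \<in> mono_set D then c' \<alpha> else 0)" by simp
  show ?thesis unfolding mdeg_le_def
  proof (intro allI impI)
    fix \<alpha> assume "c \<alpha> \<noteq> 0"
    with D' have "\<alpha> \<in> mono_set ?M" by (auto simp: mdeg_le_def mono_set_def)
    with pfun_unique[OF eq this] \<open>c \<alpha> \<noteq> 0\<close> have "\<alpha> \<in> mono_set D" by (auto split: if_splits)
    then show "sum \<alpha> UNIV \<le> D" by (simp add: mono_set_def)
  qed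
qed



definition Ez :: "real poly \<Rightarrow> complex \<Rightarrow> complex" where
  "Ez p z = poly (map_poly complex_of_real p) z"

lemma Ez_pCons: "Ez (pCons a p) z = of_real a + z * Ez p z"
  by (simp add: Ez_def map_poly_pCons)

lemma Ez_0[simp]: "Ez 0 z = 0" by (simp add: Ez_def)

lemma Ez_add: "Ez (p + q) z = Ez p z + Ez q z"
proof -
  have "map_poly complex_of_real (p + q) = map_poly complex_of_real p + map_poly complex_of_real q"
    by (intro poly_eqI) (simp add: coeff_map_poly)
  then show ?thesis by (simp add: Ez_def)
qed

lemma Ez_smult: "Ez (smult a q) z = of_real a * Ez q z"
proof -
  have "map_poly complex_of_real (smult a q) = smult (of_real a) (map_poly complex_of_real q)"
    by (intro poly_eqI) (simp add: coeff_map_poly)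
  then show ?thesis by (simp add: Ez_def)
qed

lemma Ez_mult: "Ez (p * q) z = Ez p z * Ez q z"
proof (induction p)
  case 0 then show ?case by simp
next
  case (pCons a p)
  have "Ez (pCons a p * q) z = Ez (smult a q + pCons 0 (p * q)) z" by simp
  also have "\<dots> = of_real a * Ez q z + z * (Ez p z * Ez q z)"
    by (simp add: Ez_add Ez_smult Ez_pCons pCons.IH)
  also have "\<dots> = Ez (pCons a p) z * Ez q z" by (simp add: Ez_pCons algebra_simps)
  finally show ?case .
qed

lemma Ez_of_real: "Ez p (of_real t) = of_real (poly p t)"
  by (induction p) (auto simp: Ez_pCons)

lemma ring_id1: "(P::'a::comm_ring_1) * P * (A^2 + B^2) = (P*A)^2 + (P*B)^2"
  by (simp add: power2_eq_square algebra_simps)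

lemma ring_id2: "((A::'a::comm_ring_1)^2 + B^2) * (P^2 + Q^2) = (P*A - Q*B)^2 + (P*B + Q*A)^2"
  by (simp add: power2_eq_square algebra_simps)

lemma sq_deg_le:
  fixes P A :: "real poly"
  shows "degree (P * A) \<le> degree P + degree A"
  by (rule degree_mult_le)

lemma nonneg_sos2:
  fixes q :: "real poly"
  assumes "\<forall>x. poly q x \<ge> 0"
  shows "\<exists>A B. q = A^2 + B^2 \<and> 2 * degree A \<le> degree q \<and> 2 * degree B \<le> degree q"
  using assms
proof (induction "degree q" arbitrary: q rule: less_induct)
  case (less q)
  show ?case
  proof (cases "degree q = 0")
    case True
    define c where "c = coeff q 0"
    have q: "q = [:c:]" using degree_0_id[OF True] by (simp add: c_def)
    have "c \<ge> 0" using less.prems[rule_format, of 0] by (simp add: q)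
    have "q = [:sqrt c:]^2 + 0^2" using \<open>c \<ge> 0\<close> by (simp add: q power2_eq_square)
    then show ?thesis by (intro exI[of _ "[:sqrt c:]"] exI[of _ 0]) simp
  next
    case False
    then have q0: "q \<noteq> 0" by auto
    have "\<not> (\<exists>a l. a \<noteq> 0 \<and> l = 0 \<and> map_poly complex_of_real q = pCons a l)"
    proof
      assume "\<exists>a l. a \<noteq> 0 \<and> l = 0 \<and> map_poly complex_of_real q = pCons a l"
      then have "degree (map_poly complex_of_real q) = 0" by auto
      moreover have "degree (map_poly complex_of_real q) = degree q"
        by (rule map_poly_degree_eq) (use q0 in simp)
      ultimately show False using False by simp
    qed
    from fundamental_theorem_of_algebra_alt[OF this] obtain z where z: "Ez q z = 0"
      unfolding Ez_def by blast
    show ?thesis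
    proof (cases "Im z = 0")
      case True
      define a where "a = Re z"
      have za: "z = of_real a" using True by (simp add: a_def complex_eq_iff)
      have "poly q a = 0" using z Ez_of_real[of q a] by (simp add: za)
      then have "[:-a, 1:] dvd q" by (simp add: poly_eq_0_iff_dvd)
      then obtain q1 where q1: "q = [:-a, 1:] * q1" by (auto simp: dvd_def)
      have "poly (pderiv q) a = 0"
      proof (rule DERIV_local_min[where f="poly q"])
        show "DERIV (poly q) a :> poly (pderiv q) a" by (rule poly_DERIV)
        show "(0::real) < 1" by simp
        show "\<forall>y. \<bar>a - y\<bar> < 1 \<longrightarrow> poly q a \<le> poly q y"
          using less.prems \<open>poly q a = 0\<close> by simp
      qed
      moreover have "poly (pderiv q) a = poly q1 a"
        unfolding q1 pderiv_mult by (simp add: pderiv_pCons)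
      ultimately have "poly q1 a = 0" by simp
      then have "[:-a, 1:] dvd q1" by (simp add: poly_eq_0_iff_dvd)
      then obtain q2 where q2: "q1 = [:-a, 1:] * q2" by (auto simp: dvd_def)
      have qq: "q = [:-a, 1:] * [:-a, 1:] * q2" by (simp only: q1 q2 mult.assoc)
      have q2nz: "q2 \<noteq> 0" using q0 qq by auto
      have P0: "[:-a, 1::real:] \<noteq> 0" by simp
      have PP0: "[:-a, 1::real:] * [:-a, 1:] \<noteq> 0" by (rule no_zero_divisors[OF P0 P0])
      have d1: "degree ([:-a, 1::real:] * [:-a, 1:]) = 2" by (subst degree_mult_eq[OF P0 P0]) simp
      have "degree q = degree ([:-a, 1::real:] * [:-a, 1:]) + degree q2"
        unfolding qq by (rule degree_mult_eq[OF PP0 q2nz])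
      then have degq: "degree q = degree q2 + 2" using d1 by simp
      have pos_off: "poly q2 t \<ge> 0" if "t \<noteq> a" for t
      proof -
        have "poly q t = (t - a)^2 * poly q2 t" by (simp add: qq power2_eq_square algebra_simps)
        moreover have "(t - a)^2 > 0" using that by simp
        ultimately show ?thesis using less.prems[rule_format, of t] mult_pos_neg[of "(t - a)^2" "poly q2 t"]
          by force
      qed
      have "poly q2 a \<ge> 0"
      proof (rule ccontr)
        assume "\<not> poly q2 a \<ge> 0"
        then have "poly q2 a < 0" by simp
        moreover have "poly q2 \<midarrow>a\<rightarrow> poly q2 a"
          using poly_isCont[of a q2] by (simp add: isCont_def)
        ultimately obtain r where r: "r > 0" "\<forall>x. x \<noteq> a \<and> \<bar>a - x\<bar> < r \<longrightarrow> poly q2 x < 0"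
          using LIM_fun_less_zero by blast
        then have "poly q2 (a + r/2) < 0" by simp
        moreover have "poly q2 (a + r/2) \<ge> 0" using pos_off r(1) by simp
        ultimately show False by simp
      qed
      then have "\<forall>x. poly q2 x \<ge> 0" using pos_off by metis
      moreover have "degree q2 < degree q" using degq by simp
      ultimately obtain A B where AB: "q2 = A^2 + B^2" "2 * degree A \<le> degree q2" "2 * degree B \<le> degree q2"
        using less.hyps by blast
      let ?P = "[:-a, 1:]"
      have "q = (?P * A)^2 + (?P * B)^2" unfolding qq AB(1) by (rule ring_id1)
      moreover have "2 * degree (?P * A) \<le> degree q"
        using degree_mult_le[of ?P A] AB(2) degq by simp
      moreover have "2 * degree (?P * B) \<le> degree q"
        using degree_mult_le[of ?P B] AB(3) degq by simp
      ultimately show ?thesis by blast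
    next
      case False
      define b where "b = Re z"
      define c where "c = Im z"
      have c0: "c \<noteq> 0" using False by (simp add: c_def)
      define Dp where "Dp = [:b^2 + c^2, -2*b, 1:]"
      have Dp0: "Dp \<noteq> 0" by (simp add: Dp_def)
      have degDp: "degree Dp = 2" by (simp add: Dp_def)
      have EzD: "Ez Dp z = 0"
        by (simp add: Dp_def Ez_pCons complex_eq_iff b_def c_def power2_eq_square algebra_simps)
      define s where "s = q div Dp"
      define r where "r = q mod Dp"
      have qsr: "q = s * Dp + r" by (simp add: s_def r_def)
      have "Ez r z = 0" using z EzD qsr by (metis Ez_add Ez_mult add_0 mult_zero_right)
      have "r = 0"
      proof (rule ccontr)
        assume "r \<noteq> 0"
        then have "degree r < 2" using degree_mod_less[OF Dp0, of q] degDp by (simp add: r_def)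
        then have rr: "r = [:coeff r 0, coeff r 1:]"
          by (intro poly_eqI) (auto simp: coeff_pCons coeff_eq_0 split: nat.splits)
        have "Ez r z = of_real (coeff r 0) + z * of_real (coeff r 1)"
          by (subst rr) (simp add: Ez_pCons)
        with \<open>Ez r z = 0\<close> have "coeff r 1 * c = 0" "coeff r 0 + coeff r 1 * b = 0"
          by (simp_all add: complex_eq_iff b_def c_def mult.commute)
        then have "coeff r 1 = 0" "coeff r 0 = 0" using c0 by auto
        then have "r = 0" by (subst rr) simp
        with \<open>r \<noteq> 0\<close> show False by simp
      qed
      then have qs: "q = s * Dp" using qsr by simp
      have Dpos: "poly Dp t > 0" for t
      proof -
        have "poly Dp t = (t - b)^2 + c^2" by (simp add: Dp_def power2_eq_square algebra_simps)
        moreover have "c^2 > 0" using c0 by simp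
        ultimately show ?thesis by (metis add_nonneg_pos zero_le_power2)
      qed
      have "poly s t \<ge> 0" for t
      proof -
        have "poly q t = poly s t * poly Dp t" by (simp add: qs)
        then show ?thesis using less.prems[rule_format, of t] Dpos[of t]
          by (metis zero_le_mult_iff not_less)
      qed
      moreover have s0: "s \<noteq> 0" using q0 qs by auto
      have degq: "degree q = degree s + 2" using s0 Dp0 degDp by (simp add: qs degree_mult_eq)
      ultimately obtain A B where AB: "s = A^2 + B^2" "2 * degree A \<le> degree s" "2 * degree B \<le> degree s"
        using less.hyps[of s] by auto
      let ?P = "[:-b, 1:]" and ?Q = "[:c:]"
      have DPQ: "Dp = ?P^2 + ?Q^2" by (simp add: Dp_def power2_eq_square algebra_simps)
      have "q = (?P * A - ?Q * B)^2 + (?P * B + ?Q * A)^2"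
        unfolding qs AB(1) DPQ by (rule ring_id2)
      moreover have "2 * degree (?P * A - ?Q * B) \<le> degree q"
      proof -
        have "degree (?P * A - ?Q * B) \<le> max (degree (?P * A)) (degree (?Q * B))" by (rule degree_diff_le_max)
        moreover have "degree (?P * A) \<le> 1 + degree A" using degree_mult_le[of ?P A] by simp
        moreover have "degree (?Q * B) \<le> degree B" using degree_mult_le[of ?Q B] by simp
        ultimately show ?thesis using AB degq by linarith
      qed
      moreover have "2 * degree (?P * B + ?Q * A) \<le> degree q"
      proof -
        have "degree (?P * B + ?Q * A) \<le> max (degree (?P * B)) (degree (?Q * A))" by (rule degree_add_le_max)
        moreover have "degree (?P * B) \<le> 1 + degree B" using degree_mult_le[of ?P B] by simp
        moreover have "degree (?Q * A) \<le> degree A" using degree_mult_le[of ?Q A] by simp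
        ultimately show ?thesis using AB degq by linarith
      qed
      ultimately show ?thesis by blast
    qed
  qed
qed



lemma sum_pow_idx: "sum (pow_idx j i) (UNIV::'n::finite set) = i"
  by (simp add: pow_idx_def)

lemma pow_idx_mono_set: "i \<le> D \<Longrightarrow> pow_idx j i \<in> mono_set D"
  by (simp add: mono_set_def sum_pow_idx)

lemma monomial_val_pow: "monomial_val (pow_idx j i) x = (x$j)^i"
proof -
  have "monomial_val (pow_idx j i) x = (\<Prod>k\<in>UNIV. if k = j then (x$k)^i else 1)"
    unfolding monomial_val_def pow_idx_def by (intro prod.cong) auto
  also have "\<dots> = (x$j)^i" by simp
  finally show ?thesis .
qed

lemma univ_mm_eq:
  assumes "a + b \<le> D"
  shows "univ_moment_matrix D y j a b = y (pow_idx j (a + b))"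
proof -
  have "univ_moment_matrix D y j a b = (\<Sum>\<alpha>\<in>mono_set D. if \<alpha> = pow_idx j (a + b) then y (pow_idx j (a + b)) else 0)"
    unfolding univ_moment_matrix_def by (rule sum.cong) auto
  also have "\<dots> = y (pow_idx j (a + b))"
    by (rule trans[OF sum.delta[OF finite_mono_set]]) (use pow_idx_mono_set[OF assms, of j] in simp)
  finally show ?thesis .
qed

lemma poly_as_mon:
  fixes h :: "real poly"
  assumes "degree h \<le> N"
  shows "poly h (x$j) = (\<Sum>i\<le>N. coeff h i * monomial_val (pow_idx j i) x)"
proof -
  have "poly h (x$j) = (\<Sum>i\<le>degree h. coeff h i * (x$j)^i)" by (rule poly_altdef)
  also have "\<dots> = (\<Sum>i\<le>N. coeff h i * (x$j)^i)"
    by (rule sum.mono_neutral_left) (use assms in \<open>auto simp: coeff_eq_0\<close>)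
  finally show ?thesis by (simp add: monomial_val_pow)
qed

lemma pf_upoly:
  fixes h :: "real poly"
  assumes "degree h \<le> D"
  shows "pf D (\<lambda>x. poly h (x$j))"
proof -
  have "pf D (\<lambda>x. \<Sum>i\<le>D. coeff h i * monomial_val (pow_idx j i) x)"
    by (intro pf_sum pf_scale pf_mon pow_idx_mono_set) auto
  moreover have "(\<lambda>x. poly h (x$j)) = (\<lambda>x. \<Sum>i\<le>D. coeff h i * monomial_val (pow_idx j i) x)"
    by (rule ext) (rule poly_as_mon[OF assms])
  ultimately show ?thesis by simp
qed

lemma Lam_upoly_sq:
  fixes A :: "real poly"
  assumes "degree A \<le> dj" "2 * dj \<le> D"
    and psd: "psd_on {0..dj} (univ_moment_matrix D y j)"
  shows "Lam D y (\<lambda>x. (poly A (x$j))^2) \<ge> 0"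
proof -
  let ?c = "coeff A"
  have eq: "(\<lambda>x. (poly A (x$j))^2) = (\<lambda>x. \<Sum>a\<in>{0..dj}. \<Sum>b\<in>{0..dj}.
      (?c a * ?c b) * monomial_val (pow_idx j (a + b)) x)"
  proof
    fix x
    have p: "poly A (x$j) = (\<Sum>i\<in>{0..dj}. ?c i * (x$j)^i)"
      using poly_as_mon[OF assms(1), of x j] by (simp add: monomial_val_pow atLeast0AtMost)
    show "(poly A (x$j))^2 = (\<Sum>a\<in>{0..dj}. \<Sum>b\<in>{0..dj}. (?c a * ?c b) * monomial_val (pow_idx j (a + b)) x)"
      unfolding p power2_eq_square sum_distrib_left sum_distrib_right monomial_val_pow
      by (simp add: power_add mult_ac)
  qed
  have pfs: "pf D (\<lambda>x. (?c a * ?c b) * monomial_val (pow_idx j (a + b)) x)"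
    if "a \<in> {0..dj}" "b \<in> {0..dj}" for a b
    using that assms(2) by (intro pf_scale pf_mon pow_idx_mono_set) auto
  have "Lam D y (\<lambda>x. (poly A (x$j))^2) = (\<Sum>a\<in>{0..dj}. \<Sum>b\<in>{0..dj}. (?c a * ?c b) * y (pow_idx j (a + b)))"
    unfolding eq
    apply (subst Lam_sum)
      apply simp
     apply (rule pf_sum, simp, rule pfs, assumption, assumption)
    apply (rule sum.cong[OF refl])
    apply (subst Lam_sum)
      apply simp
     apply (rule pfs, assumption, assumption)
    apply (rule sum.cong[OF refl])
    apply (subst Lam_scale)
     apply (rule pf_mon, rule pow_idx_mono_set)
    using assms(2) apply simp
    apply (subst Lam_mon)
     apply (rule pow_idx_mono_set)
    using assms(2) apply simp
    apply simp
    done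
  also have "\<dots> = (\<Sum>a\<in>{0..dj}. \<Sum>b\<in>{0..dj}. ?c a * univ_moment_matrix D y j a b * ?c b)"
    using assms(2) by (intro sum.cong refl) (auto simp: univ_mm_eq)
  also have "\<dots> \<ge> 0" using psd unfolding psd_on_def by blast
  finally show ?thesis .
qed

lemma Lam_univ_jensen:
  fixes u :: "real poly"
  assumes conv: "convex_on UNIV (poly u)" and deg: "degree u \<le> 2 * dj" and D: "2 * dj \<le> D" "1 \<le> D"
    and psd: "psd_on {0..dj} (univ_moment_matrix D y j)" and y0: "y (\<lambda>_. 0) = 1"
  shows "Lam D y (\<lambda>x. poly u (x$j)) \<ge> poly u (y (unit_idx j))"
proof -
  define a where "a = y (unit_idx j)"
  define u1 where "u1 = poly (pderiv u) a"
  define q where "q = u - [:poly u a:] - smult u1 [:-a, 1:]"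
  have polyq: "poly q t = poly u t - poly u a - u1 * (t - a)" for t
    by (simp add: q_def algebra_simps)
  have qnn: "\<forall>t. poly q t \<ge> 0"
  proof
    fix t
    have "poly u t - poly u a \<ge> u1 * (t - a)"
      unfolding u1_def
      by (rule convex_on_imp_above_tangent[OF conv]) (auto simp: poly_DERIV)
    then show "poly q t \<ge> 0" by (simp add: polyq)
  qed
  have degq: "degree q \<le> 2 * dj"
  proof -
    have "degree (smult u1 [:-a, 1:]) \<le> degree u"
    proof (cases "degree u = 0")
      case True
      then have "pderiv u = 0" by (simp add: pderiv_eq_0_iff)
      then show ?thesis by (simp add: u1_def)
    next
      case False
      then show ?thesis using degree_smult_le[of u1 "[:-a, 1:]"] by simp
    qed
    moreover have "degree (u - [:poly u a:]) \<le> degree u"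
      using degree_diff_le_max[of u "[:poly u a:]"] by simp
    ultimately have "degree q \<le> degree u"
      unfolding q_def using degree_diff_le_max[of "u - [:poly u a:]" "smult u1 [:-a, 1:]"] by simp
    then show ?thesis using deg by simp
  qed
  obtain A B where AB: "q = A^2 + B^2" "2 * degree A \<le> degree q" "2 * degree B \<le> degree q"
    using nonneg_sos2[OF qnn] by blast
  have dA: "degree A \<le> dj" and dB: "degree B \<le> dj" using AB degq by auto
  have pfA: "pf D (\<lambda>x. (poly A (x$j))^2)"
  proof -
    have "pf (dj + dj) (\<lambda>x. poly A (x$j) * poly A (x$j))" by (intro pf_mult pf_upoly dA)
    then have "pf D (\<lambda>x. poly A (x$j) * poly A (x$j))" by (rule pf_mono) (use D in simp)
    then show ?thesis by (simp add: power2_eq_square)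
  qed
  have pfB: "pf D (\<lambda>x. (poly B (x$j))^2)"
  proof -
    have "pf (dj + dj) (\<lambda>x. poly B (x$j) * poly B (x$j))" by (intro pf_mult pf_upoly dB)
    then have "pf D (\<lambda>x. poly B (x$j) * poly B (x$j))" by (rule pf_mono) (use D in simp)
    then show ?thesis by (simp add: power2_eq_square)
  qed
  have pfL: "pf D (\<lambda>x. poly u a + u1 * (x$j - a))"
    using D by (intro pf_add pf_const pf_scale pf_diff pf_coord) auto
  have eq: "(\<lambda>x. poly u (x$j)) = (\<lambda>x. ((poly A (x$j))^2 + (poly B (x$j))^2) + (poly u a + u1 * (x$j - a)))"
  proof
    fix x
    have "poly q (x$j) = (poly A (x$j))^2 + (poly B (x$j))^2" by (simp add: AB(1))
    then show "poly u (x$j) = ((poly A (x$j))^2 + (poly B (x$j))^2) + (poly u a + u1 * (x$j - a))"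
      using polyq[of "x$j"] by simp
  qed
  have LL: "Lam D y (\<lambda>x. poly u a + u1 * (x$j - a)) = poly u a"
  proof -
    have "Lam D y (\<lambda>x. poly u a + u1 * (x$j - a)) = Lam D y (\<lambda>x. poly u a) + Lam D y (\<lambda>x. u1 * (x$j - a))"
      using D by (intro Lam_add pf_const pf_scale pf_diff pf_coord) auto
    also have "Lam D y (\<lambda>x. u1 * (x$j - a)) = u1 * (Lam D y (\<lambda>x. x$j) - Lam D y (\<lambda>x. a))"
      using D by (simp add: Lam_scale Lam_diff pf_diff pf_coord pf_const)
    also have "Lam D y (\<lambda>x. x$j) = a" using D by (simp add: Lam_coord a_def)
    finally show ?thesis by (simp add: Lam_const y0)
  qed
  have "Lam D y (\<lambda>x. poly u (x$j)) = Lam D y (\<lambda>x. (poly A (x$j))^2) + Lam D y (\<lambda>x. (poly B (x$j))^2) + poly u a"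
    unfolding eq
    by (simp add: Lam_add pfA pfB pfL pf_add LL)
  moreover have "Lam D y (\<lambda>x. (poly A (x$j))^2) \<ge> 0" by (rule Lam_upoly_sq[OF dA D(1) psd])
  moreover have "Lam D y (\<lambda>x. (poly B (x$j))^2) \<ge> 0" by (rule Lam_upoly_sq[OF dB D(1) psd])
  ultimately show ?thesis by (simp add: a_def)
qed



lemma sum_sq_degree:
  fixes A :: "'t \<Rightarrow> real poly"
  assumes "finite T" "(\<Sum>t\<in>T. (A t)^2) = B" "t0 \<in> T"
  shows "2 * degree (A t0) \<le> degree B"
proof -
  define m where "m = Max ((\<lambda>t. degree (A t)) ` T)"
  have mge: "degree (A t) \<le> m" if "t \<in> T" for t
    unfolding m_def using assms(1) that by (intro Max_ge) auto
  have "2 * m \<le> degree B"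
  proof (cases "m = 0")
    case True then show ?thesis by simp
  next
    case False
    have "m \<in> (\<lambda>t. degree (A t)) ` T" unfolding m_def using assms by (intro Max_in) auto
    then obtain t1 where t1: "t1 \<in> T" "degree (A t1) = m" by auto
    then have A1: "A t1 \<noteq> 0" using False by auto
    have cf: "coeff ((A t)^2) (2 * m) = (if degree (A t) = m then (lead_coeff (A t))^2 else 0)"
      if "t \<in> T" for t
    proof (cases "degree (A t) = m")
      case True
      then show ?thesis using coeff_mult_degree_sum[of "A t" "A t"] by (simp add: power2_eq_square mult_2)
    next
      case False
      with mge[OF that] have "degree (A t) < m" by simp
      then have "degree ((A t)^2) < 2 * m"
        using degree_mult_le[of "A t" "A t"] by (simp add: power2_eq_square)
      then show ?thesis using False by (simp add: coeff_eq_0)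
    qed
    have "coeff B (2 * m) = (\<Sum>t\<in>T. coeff ((A t)^2) (2 * m))"
      using assms(2) by (auto simp: coeff_sum)
    also have "\<dots> = (\<Sum>t\<in>T. (if degree (A t) = m then (lead_coeff (A t))^2 else 0))"
      using cf by (intro sum.cong) auto
    also have "\<dots> \<ge> (if degree (A t1) = m then (lead_coeff (A t1))^2 else 0)"
      by (rule member_le_sum) (use t1 assms(1) in auto)
    finally have "coeff B (2 * m) \<ge> (lead_coeff (A t1))^2" using t1 by simp
    moreover have "(lead_coeff (A t1))^2 > 0" using A1 by simp
    ultimately have "coeff B (2 * m) \<noteq> 0" by linarith
    then show ?thesis by (rule le_degree)
  qed
  then show ?thesis using mge[OF assms(3)] by linarith
qed

lemma monomial_val_scale: "monomial_val \<alpha> (l *\<^sub>R x) = l ^ (sum \<alpha> UNIV) * monomial_val \<alpha> x"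
  by (simp add: monomial_val_def power_mult_distrib prod.distrib power_sum)

definition hom_poly :: "nat \<Rightarrow> (('n::finite \<Rightarrow> nat) \<Rightarrow> real) \<Rightarrow> real^'n \<Rightarrow> real poly" where
  "hom_poly E c x = (\<Sum>\<alpha>\<in>mono_set E. monom (c \<alpha> * monomial_val \<alpha> x) (sum \<alpha> UNIV))"

lemma poly_hom_poly: "poly (hom_poly E c x) l = pfun E c (l *\<^sub>R x)"
  by (simp add: hom_poly_def pfun_def poly_sum poly_monom monomial_val_scale mult_ac)

lemma degree_hom_poly: "degree (hom_poly E c x) \<le> E"
  unfolding hom_poly_def
  by (rule degree_sum_le[OF finite_mono_set]) (auto intro: order_trans[OF degree_monom_le] simp: mono_set_def)

lemma coeff_hom_poly:
  "coeff (hom_poly E c x) e = pfun E (\<lambda>\<alpha>. if sum \<alpha> UNIV = e then c \<alpha> else 0) x"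
  unfolding hom_poly_def pfun_def coeff_sum coeff_monom by (intro sum.cong) auto

lemma pf_sos_deg:
  fixes G :: "'t \<Rightarrow> real^'n::finite \<Rightarrow> real"
  assumes T: "finite T" and G: "\<And>t. t \<in> T \<Longrightarrow> pf E (G t)" and Q: "pf (2 * r) Q"
    and eq: "\<And>x. (\<Sum>t\<in>T. (G t x)^2) = Q x" and t0: "t0 \<in> T"
  shows "pf r (G t0)"
proof -
  have "\<forall>t\<in>T. \<exists>c. G t = pfun E c" using G by (auto simp: pf_def)
  then obtain c where c: "\<And>t. t \<in> T \<Longrightarrow> G t = pfun E (c t)" by metis
  obtain cq where cq: "Q = pfun (2 * r) cq" using Q by (auto simp: pf_def)
  have deg: "degree (hom_poly E (c t0) x) \<le> r" for x
  proof -
    have "poly (\<Sum>t\<in>T. (hom_poly E (c t) x)^2) = poly (hom_poly (2 * r) cq x)"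
    proof
      fix l
      have "poly (\<Sum>t\<in>T. (hom_poly E (c t) x)^2) l = (\<Sum>t\<in>T. (G t (l *\<^sub>R x))^2)"
        by (simp add: poly_sum poly_hom_poly c)
      also have "\<dots> = Q (l *\<^sub>R x)" by (rule eq)
      also have "\<dots> = poly (hom_poly (2 * r) cq x) l" by (simp add: cq poly_hom_poly)
      finally show "poly (\<Sum>t\<in>T. (hom_poly E (c t) x)^2) l = poly (hom_poly (2 * r) cq x) l" .
    qed
    then have "(\<Sum>t\<in>T. (hom_poly E (c t) x)^2) = hom_poly (2 * r) cq x"
      by (simp add: poly_eq_poly_eq_iff)
    from sum_sq_degree[OF T this t0] degree_hom_poly[of "2 * r" cq x]
    show ?thesis by linarith
  qed
  have vanish: "c t0 \<alpha> = 0" if "\<alpha> \<in> mono_set E" "sum \<alpha> UNIV > r" for \<alpha>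
  proof -
    let ?e = "sum \<alpha> UNIV"
    have "pfun E (\<lambda>\<beta>. if sum \<beta> UNIV = ?e then c t0 \<beta> else 0) x = pfun E (\<lambda>_. 0) x" for x
    proof -
      have "coeff (hom_poly E (c t0) x) ?e = 0" using deg[of x] that(2) by (simp add: coeff_eq_0)
      then show ?thesis by (simp add: coeff_hom_poly pfun_def)
    qed
    then have "pfun E (\<lambda>\<beta>. if sum \<beta> UNIV = ?e then c t0 \<beta> else 0) = pfun E (\<lambda>_. 0)" by (rule ext)
    from pfun_unique[OF this that(1)] show ?thesis by simp
  qed
  show ?thesis
  proof (cases "E \<le> r")
    case True
    then show ?thesis using G[OF t0] by (rule pf_mono[rotated])
  next
    case False
    have "G t0 = pfun r (c t0)"
    proof
      fix x
      have "G t0 x = (\<Sum>\<alpha>\<in>mono_set E. c t0 \<alpha> * monomial_val \<alpha> x)" by (simp add: c[OF t0] pfun_def)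
      also have "\<dots> = (\<Sum>\<alpha>\<in>mono_set r. c t0 \<alpha> * monomial_val \<alpha> x)"
        by (rule sum.mono_neutral_right[OF finite_mono_set])
           (use False vanish in \<open>auto simp: mono_set_def\<close>)
      finally show "G t0 x = pfun r (c t0) x" by (simp add: pfun_def)
    qed
    then show ?thesis by simp
  qed
qed

lemma mm_eq:
  assumes "\<beta> \<in> mono_set r" "\<gamma> \<in> mono_set r" "2 * r \<le> D"
  shows "moment_matrix D y \<beta> \<gamma> = y (\<lambda>k. \<beta> k + \<gamma> k)"
proof -
  have m: "(\<lambda>k. \<beta> k + \<gamma> k) \<in> mono_set D"
    using mono_set_add[OF assms(1,2)] mono_set_mono[of "r + r" D] assms(3) by auto
  have "moment_matrix D y \<beta> \<gamma> = (\<Sum>\<alpha>\<in>mono_set D. if \<alpha> = (\<lambda>k. \<beta> k + \<gamma> k) then y (\<lambda>k. \<beta> k + \<gamma> k) else 0)"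
    unfolding moment_matrix_def by (rule sum.cong) auto
  also have "\<dots> = y (\<lambda>k. \<beta> k + \<gamma> k)"
    by (rule trans[OF sum.delta[OF finite_mono_set]]) (use m in simp)
  finally show ?thesis .
qed

lemma Lam_sq_nonneg:
  assumes G: "pf r G" and D: "2 * r \<le> D" and psd: "psd_on (mono_set r) (moment_matrix D y)"
  shows "Lam D y (\<lambda>x. (G x)^2) \<ge> 0"
proof -
  obtain c where c: "G = pfun r c" using G by (auto simp: pf_def)
  have mD: "(\<lambda>k. \<beta> k + \<gamma> k) \<in> mono_set D" if "\<beta> \<in> mono_set r" "\<gamma> \<in> mono_set r" for \<beta> \<gamma>
    using mono_set_add[OF that] mono_set_mono[of "r + r" D] D by auto
  have eq: "(\<lambda>x. (G x)^2) = (\<lambda>x. \<Sum>\<beta>\<in>mono_set r. \<Sum>\<gamma>\<in>mono_set r.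
      (c \<beta> * c \<gamma>) * monomial_val (\<lambda>k. \<beta> k + \<gamma> k) x)"
    by (rule ext) (simp add: c pfun_def power2_eq_square sum_distrib_left sum_distrib_right monomial_val_add mult_ac)
  have pfs: "pf D (\<lambda>x. (c \<beta> * c \<gamma>) * monomial_val (\<lambda>k. \<beta> k + \<gamma> k) x)"
    if "\<beta> \<in> mono_set r" "\<gamma> \<in> mono_set r" for \<beta> \<gamma>
    by (intro pf_scale pf_mon mD that)
  have "Lam D y (\<lambda>x. (G x)^2) = (\<Sum>\<beta>\<in>mono_set r. \<Sum>\<gamma>\<in>mono_set r. (c \<beta> * c \<gamma>) * y (\<lambda>k. \<beta> k + \<gamma> k))"
    unfolding eq
    apply (subst Lam_sum)
      apply (rule finite_mono_set)
     apply (rule pf_sum, rule finite_mono_set, rule pfs, assumption, assumption)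
    apply (rule sum.cong[OF refl])
    apply (subst Lam_sum)
      apply (rule finite_mono_set)
     apply (rule pfs, assumption, assumption)
    apply (rule sum.cong[OF refl])
    apply (subst Lam_scale)
     apply (rule pf_mon, rule mD, assumption, assumption)
    apply (subst Lam_mon)
     apply (rule mD, assumption, assumption)
    apply simp
    done
  also have "\<dots> = (\<Sum>\<beta>\<in>mono_set r. \<Sum>\<gamma>\<in>mono_set r. c \<beta> * moment_matrix D y \<beta> \<gamma> * c \<gamma>)"
    using D by (intro sum.cong refl) (auto simp: mm_eq)
  also have "\<dots> \<ge> 0" using psd unfolding psd_on_def by blast
  finally show ?thesis .
qed

lemma line_poly:
  fixes a v :: "real^'n::finite"
  assumes "is_mpoly p" "mdeg_le p N"
  shows "\<exists>P. degree P \<le> N \<and> (\<forall>s. poly P s = peval p (a + s *\<^sub>R v))"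
proof -
  let ?S = "{\<alpha>. p \<alpha> \<noteq> 0}"
  define P where "P = (\<Sum>\<alpha>\<in>?S. smult (p \<alpha>) (\<Prod>j\<in>UNIV. [:a$j, v$j:] ^ \<alpha> j))"
  have "poly P s = peval p (a + s *\<^sub>R v)" for s
    by (simp add: P_def poly_sum poly_prod peval_def monomial_val_line)
  moreover have "degree P \<le> N"
    unfolding P_def
  proof (rule degree_sum_le)
    show "finite ?S" using assms(1) by (simp add: is_mpoly_def)
  next
    fix \<alpha> assume "\<alpha> \<in> ?S"
    then have "sum \<alpha> UNIV \<le> N" using assms(2) by (auto simp: mdeg_le_def)
    have "degree (\<Prod>j\<in>UNIV. [:a$j, v$j:] ^ \<alpha> j) \<le> (\<Sum>j\<in>UNIV. degree ([:a$j, v$j:] ^ \<alpha> j))"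
      using degree_prod_sum_le[of UNIV "\<lambda>j. [:a$j, v$j:] ^ \<alpha> j"] by (simp add: comp_def)
    also have "\<dots> \<le> (\<Sum>j\<in>UNIV. \<alpha> j)"
    proof (rule sum_mono)
      fix j
      have "degree ([:a$j, v$j:] ^ \<alpha> j) \<le> degree [:a$j, v$j:] * \<alpha> j" by (rule degree_power_le)
      also have "\<dots> \<le> \<alpha> j" by simp
      finally show "degree ([:a$j, v$j:] ^ \<alpha> j) \<le> \<alpha> j" .
    qed
    finally have "degree (\<Prod>j\<in>UNIV. [:a$j, v$j:] ^ \<alpha> j) \<le> sum \<alpha> UNIV" .
    moreover have "degree (smult (p \<alpha>) (\<Prod>j\<in>UNIV. [:a$j, v$j:] ^ \<alpha> j)) \<le> degree (\<Prod>j\<in>UNIV. [:a$j, v$j:] ^ \<alpha> j)"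
      by (rule degree_smult_le)
    ultimately show "degree (smult (p \<alpha>) (\<Prod>j\<in>UNIV. [:a$j, v$j:] ^ \<alpha> j)) \<le> N"
      using \<open>sum \<alpha> UNIV \<le> N\<close> by linarith
  qed
  ultimately show ?thesis by blast
qed

definition lag :: "nat \<Rightarrow> nat \<Rightarrow> real poly" where
  "lag N i = smult (1 / (\<Prod>k\<in>{..N}-{i}. (real i - real k))) (\<Prod>k\<in>{..N}-{i}. [:- real k, 1:])"

lemma poly_lag: "i \<le> N \<Longrightarrow> m \<le> N \<Longrightarrow> poly (lag N i) (real m) = (if m = i then 1 else 0)"
proof -
  assume i: "i \<le> N" and m: "m \<le> N"
  show ?thesis
  proof (cases "m = i")
    case True
    have "(\<Prod>k\<in>{..N}-{i}. (real i - real k)) \<noteq> 0" by (simp add: prod_zero_iff)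
    then show ?thesis using True by (simp add: lag_def poly_prod)
  next
    case False
    have "(\<Prod>k\<in>{..N}-{i}. (real m - real k)) = 0"
      by (rule prod_zero) (use m False in force)+
    then show ?thesis using False by (simp add: lag_def poly_prod)
  qed
qed

lemma degree_lag: "degree (lag N i) \<le> N" if "i \<le> N"
proof -
  have "degree (\<Prod>k\<in>{..N}-{i}. [:- real k, 1:]) \<le> (\<Sum>k\<in>{..N}-{i}. degree [:- real k, 1:])"
    using degree_prod_sum_le[of "{..N}-{i}" "\<lambda>k. [:- real k, 1:]"] by (simp add: comp_def)
  also have "\<dots> = card ({..N}-{i})" by simp
  also have "\<dots> \<le> N" using that by (auto simp: card_Diff_singleton)
  finally have "degree (\<Prod>k\<in>{..N}-{i}. [:- real k, 1:]) \<le> N" .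
  then show ?thesis unfolding lag_def using degree_smult_le[of "1 / (\<Prod>k\<in>{..N}-{i}. (real i - real k))" "\<Prod>k\<in>{..N}-{i}. [:- real k, 1:]"]
    by linarith
qed

lemma lag_interp:
  fixes P :: "real poly"
  assumes "degree P \<le> N"
  shows "P = (\<Sum>i\<le>N. smult (poly P (real i)) (lag N i))"
proof (rule poly_eqI_degree[where A="real ` {..N}"])
  fix x assume "x \<in> real ` {..N}"
  then obtain m where m: "m \<le> N" "x = real m" by auto
  have "poly (\<Sum>i\<le>N. smult (poly P (real i)) (lag N i)) x = (\<Sum>i\<le>N. poly P (real i) * (if m = i then 1 else 0))"
    using m by (simp add: poly_sum poly_lag)
  also have "\<dots> = poly P x" using m by (simp add: if_distrib cong: if_cong)
  finally show "poly P x = poly (\<Sum>i\<le>N. smult (poly P (real i)) (lag N i)) x" by simp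
next
  have c: "card (real ` {..N}) = Suc N" by (simp add: card_image)
  show "degree P < card (real ` {..N})" using assms c by simp
  have "degree (\<Sum>i\<le>N. smult (poly P (real i)) (lag N i)) \<le> N"
    by (rule degree_sum_le) (auto intro: order_trans[OF degree_smult_le] degree_lag)
  then show "degree (\<Sum>i\<le>N. smult (poly P (real i)) (lag N i)) < card (real ` {..N})" using c by simp
qed



lemma sos_quad:
  fixes v :: "'k \<Rightarrow> real" and f :: "'t \<Rightarrow> 'k \<Rightarrow> real"
  assumes "finite K" "finite T"
  shows "(\<Sum>k\<in>K. v k * (\<Sum>l\<in>K. v l * (\<Sum>t\<in>T. f t l * f t k))) = (\<Sum>t\<in>T. (\<Sum>k\<in>K. v k * f t k)^2)"
proof -
  have "(\<Sum>k\<in>K. v k * (\<Sum>l\<in>K. v l * (\<Sum>t\<in>T. f t l * f t k))) =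
        (\<Sum>k\<in>K. \<Sum>l\<in>K. \<Sum>t\<in>T. (v l * f t l) * (v k * f t k))"
    by (simp add: sum_distrib_left mult_ac)
  also have "\<dots> = (\<Sum>k\<in>K. \<Sum>t\<in>T. \<Sum>l\<in>K. (v l * f t l) * (v k * f t k))"
    by (rule sum.cong[OF refl]) (rule sum.swap)
  also have "\<dots> = (\<Sum>t\<in>T. \<Sum>k\<in>K. \<Sum>l\<in>K. (v l * f t l) * (v k * f t k))"
    by (rule sum.swap)
  also have "\<dots> = (\<Sum>t\<in>T. (\<Sum>k\<in>K. v k * f t k)^2)"
    by (simp add: power2_eq_square sum_distrib_left sum_distrib_right)
  finally show ?thesis .
qed

lemma Lam_sos_jensen:
  fixes p :: "'n::finite mpoly_coeffs" and y :: "('n \<Rightarrow> nat) \<Rightarrow> real"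
  assumes mp: "is_mpoly p" and dg: "mdeg_le p (2 * r)" and sc: "sos_convex p"
    and D: "2 * r \<le> D" "1 \<le> D"
    and psd: "psd_on (mono_set r) (moment_matrix D y)" and y0: "y (\<lambda>_. 0) = 1"
  shows "Lam D y (peval p) \<ge> peval p (\<chi> k. y (unit_idx k))"
proof -
  define a :: "real^'n" where "a = (\<chi> k. y (unit_idx k))"
  define N where "N = 2 * r"
  define z where "z X s = a + s *\<^sub>R (X - a)" for X :: "real^'n" and s :: real
  define h where "h X s = peval p (z X s)" for X s
  obtain q :: nat and F :: "nat \<Rightarrow> 'n \<Rightarrow> 'n mpoly_coeffs" where qF: "\<forall>t<q. \<forall>k. is_mpoly (F t k)"
    and hess: "\<forall>k l (x::real^'n). peval (pdiff k (pdiff l p)) x = (\<Sum>t<q. peval (F t k) x * peval (F t l) x)"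
    using sc unfolding sos_convex_def by blast
  have ND: "N \<le> D" using D by (simp add: N_def)
  have pfp: "pf N (peval p)" using pf_peval[OF mp dg] by (simp add: N_def)
  have pfh: "pf D (\<lambda>X. h X s)" for s
    unfolding h_def z_def by (rule pf_mono[OF pf_comp_affine[OF pfp] ND])
  have HX: "h X s = (\<Sum>i\<le>N. poly (lag N i) s * h X (real i))" for X s
  proof -
    obtain P where P: "degree P \<le> N" "\<forall>s. poly P s = peval p (a + s *\<^sub>R (X - a))"
      using line_poly[OF mp dg[folded N_def]] by blast
    have "poly P s = poly (\<Sum>i\<le>N. smult (poly P (real i)) (lag N i)) s"
      using lag_interp[OF P(1)] by simp
    then show ?thesis using P(2) by (simp add: h_def z_def poly_sum mult_ac)
  qed
  define L1 where "L1 X s = (\<Sum>i\<le>N. poly (pderiv (lag N i)) s * h X (real i))" for X s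
  define L2 where "L2 X s = (\<Sum>i\<le>N. poly (pderiv (pderiv (lag N i))) s * h X (real i))" for X s
  have D1: "((\<lambda>s. h X s) has_real_derivative L1 X s) (at s)" for X s
  proof -
    have e: "(\<lambda>s. h X s) = (\<lambda>s. \<Sum>i\<le>N. h X (real i) * poly (lag N i) s)"
    proof
      fix s
      have "h X s = (\<Sum>i\<le>N. poly (lag N i) s * h X (real i))" by (rule HX)
      also have "\<dots> = (\<Sum>i\<le>N. h X (real i) * poly (lag N i) s)" by (rule sum.cong[OF refl]) (rule mult.commute)
      finally show "h X s = (\<Sum>i\<le>N. h X (real i) * poly (lag N i) s)" .
    qed
    have d: "((\<lambda>s. \<Sum>i\<le>N. h X (real i) * poly (lag N i) s) has_real_derivative
                   (\<Sum>i\<le>N. h X (real i) * poly (pderiv (lag N i)) s)) (at s)"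
      by (intro DERIV_sum DERIV_cmult poly_DERIV)
    have l: "(\<Sum>i\<le>N. h X (real i) * poly (pderiv (lag N i)) s) = L1 X s"
      unfolding L1_def by (rule sum.cong[OF refl]) (rule mult.commute)
    show ?thesis
      apply (subst e)
      apply (subst l[symmetric])
      apply (rule d)
      done
  qed
  have E1: "L1 X s = (\<Sum>k\<in>UNIV. (X - a)$k * peval (pdiff k p) (z X s))" for X s
  proof -
    have "((\<lambda>s. h X s) has_real_derivative (\<Sum>k\<in>UNIV. (X - a)$k * peval (pdiff k p) (z X s))) (at s)"
      unfolding h_def z_def by (rule peval_line_deriv[OF mp])
    with D1[of X s] show ?thesis by (rule DERIV_unique)
  qed
  have D2: "(L1 X has_real_derivative L2 X s) (at s)" for X s
  proof -
    have e: "L1 X = (\<lambda>s. \<Sum>i\<le>N. h X (real i) * poly (pderiv (lag N i)) s)"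
      unfolding L1_def by (intro ext sum.cong[OF refl]) (rule mult.commute)
    have d: "((\<lambda>s. \<Sum>i\<le>N. h X (real i) * poly (pderiv (lag N i)) s) has_real_derivative
                   (\<Sum>i\<le>N. h X (real i) * poly (pderiv (pderiv (lag N i))) s)) (at s)"
      by (intro DERIV_sum DERIV_cmult poly_DERIV)
    have l: "(\<Sum>i\<le>N. h X (real i) * poly (pderiv (pderiv (lag N i))) s) = L2 X s"
      unfolding L2_def by (rule sum.cong[OF refl]) (rule mult.commute)
    show ?thesis using d unfolding e l .
  qed
  have E2: "L2 X s = (\<Sum>k\<in>UNIV. (X - a)$k * (\<Sum>l\<in>UNIV. (X - a)$l * peval (pdiff l (pdiff k p)) (z X s)))" for X s
  proof -
    have "L1 X = (\<lambda>s. \<Sum>k\<in>UNIV. (X - a)$k * peval (pdiff k p) (a + s *\<^sub>R (X - a)))"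
      by (rule ext) (simp add: E1 z_def)
    moreover have "((\<lambda>s. \<Sum>k\<in>UNIV. (X - a)$k * peval (pdiff k p) (a + s *\<^sub>R (X - a))) has_real_derivative
        (\<Sum>k\<in>UNIV. (X - a)$k * (\<Sum>l\<in>UNIV. (X - a)$l * peval (pdiff l (pdiff k p)) (a + s *\<^sub>R (X - a))))) (at s)"
      by (intro DERIV_sum DERIV_cmult peval_line_deriv is_mpoly_pdiff mp)
    ultimately have "(L1 X has_real_derivative
        (\<Sum>k\<in>UNIV. (X - a)$k * (\<Sum>l\<in>UNIV. (X - a)$l * peval (pdiff l (pdiff k p)) (z X s)))) (at s)"
      by (simp add: z_def)
    with D2[of X s] show ?thesis by (rule DERIV_unique)
  qed
  define G where "G t X s = (\<Sum>k\<in>UNIV. (X - a)$k * peval (F t k) (z X s))" for t X s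
  have E3: "L2 X s = (\<Sum>t<q. (G t X s)^2)" for X s
    unfolding E2 G_def using hess sos_quad[of UNIV "{..<q}" "\<lambda>k. (X - a)$k" "\<lambda>t k. peval (F t k) (z X s)"]
    by simp
  have "\<forall>tk\<in>{..<q} \<times> (UNIV::'n set). \<exists>E. pf E (peval (F (fst tk) (snd tk)))"
    using qF pf_peval_ex by auto
  then obtain Ef where Ef: "\<And>tk. tk \<in> {..<q} \<times> (UNIV::'n set) \<Longrightarrow> pf (Ef tk) (peval (F (fst tk) (snd tk)))"
    by metis
  define E where "E = Max (Ef ` ({..<q} \<times> (UNIV::'n set)))"
  have pfF: "pf E (peval (F t k))" if "t < q" for t k
  proof -
    have "(t, k) \<in> {..<q} \<times> (UNIV::'n set)" using that by simp
    then have "Ef (t, k) \<le> E" unfolding E_def by (intro Max_ge) auto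
    with Ef[OF \<open>(t, k) \<in> _\<close>] show ?thesis by (auto intro: pf_mono)
  qed
  have pc: "pf 1 (\<lambda>X. (X - a)$k)" for k
    using pf_diff[OF pf_coord pf_const, of 1 k "a$k"] by simp
  have pfG: "pf (1 + E) (\<lambda>X. G t X s)" if "t < q" for t s
    unfolding G_def z_def
    by (intro pf_sum pf_mult pc pf_comp_affine pfF that) auto
  have pfL2: "pf (2 * r) (\<lambda>X. L2 X s)" for s
    unfolding L2_def h_def z_def
    by (intro pf_sum pf_scale pf_comp_affine pfp[unfolded N_def]) auto
  have pfGr: "pf r (\<lambda>X. G t X s)" if "t < q" for t s
    by (rule pf_sos_deg[where T="{..<q}" and E="1 + E" and Q="\<lambda>X. L2 X s"])
       (use pfG pfL2 E3 that in auto)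
  define c where "c i = Lam D y (\<lambda>X. h X (real i))" for i
  have Lam_comb: "Lam D y (\<lambda>X. \<Sum>i\<le>N. w i * h X (real i)) = (\<Sum>i\<le>N. w i * c i)" for w
    by (simp add: Lam_sum Lam_scale pf_scale pfh c_def)
  define \<phi> where "\<phi> s = (\<Sum>i\<le>N. poly (lag N i) s * c i)" for s
  define \<phi>1 where "\<phi>1 s = (\<Sum>i\<le>N. poly (pderiv (lag N i)) s * c i)" for s
  define \<phi>2 where "\<phi>2 s = (\<Sum>i\<le>N. poly (pderiv (pderiv (lag N i))) s * c i)" for s
  have phi: "\<phi> s = Lam D y (\<lambda>X. h X s)" for s
  proof -
    have "(\<lambda>X. h X s) = (\<lambda>X. \<Sum>i\<le>N. poly (lag N i) s * h X (real i))" by (rule ext) (rule HX)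
    then show ?thesis by (simp add: Lam_comb \<phi>_def)
  qed
  have phi1: "\<phi>1 s = Lam D y (\<lambda>X. L1 X s)" for s
    unfolding L1_def \<phi>1_def by (simp add: Lam_comb)
  have phi2: "\<phi>2 s = Lam D y (\<lambda>X. L2 X s)" for s
    unfolding L2_def \<phi>2_def by (simp add: Lam_comb)
  have dphi: "(\<phi> has_real_derivative \<phi>1 s) (at s)" for s
  proof -
    have "((\<lambda>s. \<Sum>i\<le>N. c i * poly (lag N i) s) has_real_derivative (\<Sum>i\<le>N. c i * poly (pderiv (lag N i)) s)) (at s)"
      by (intro DERIV_sum DERIV_cmult poly_DERIV)
    moreover have "\<phi> = (\<lambda>s. \<Sum>i\<le>N. c i * poly (lag N i) s)"
      by (rule ext) (simp add: \<phi>_def mult.commute)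
    moreover have "(\<Sum>i\<le>N. c i * poly (pderiv (lag N i)) s) = \<phi>1 s"
      by (simp add: \<phi>1_def mult.commute)
    ultimately show ?thesis by simp
  qed
  have dphi1: "(\<phi>1 has_real_derivative \<phi>2 s) (at s)" for s
  proof -
    have "((\<lambda>s. \<Sum>i\<le>N. c i * poly (pderiv (lag N i)) s) has_real_derivative (\<Sum>i\<le>N. c i * poly (pderiv (pderiv (lag N i))) s)) (at s)"
      by (intro DERIV_sum DERIV_cmult poly_DERIV)
    moreover have "\<phi>1 = (\<lambda>s. \<Sum>i\<le>N. c i * poly (pderiv (lag N i)) s)"
      by (rule ext) (simp add: \<phi>1_def mult.commute)
    moreover have "(\<Sum>i\<le>N. c i * poly (pderiv (pderiv (lag N i))) s) = \<phi>2 s"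
      by (simp add: \<phi>2_def mult.commute)
    ultimately show ?thesis by simp
  qed
  have phi2_nn: "\<phi>2 s \<ge> 0" for s
  proof -
    have sq: "pf D (\<lambda>X. (G t X s)^2)" if "t < q" for t
    proof -
      have "pf (r + r) (\<lambda>X. G t X s * G t X s)" by (intro pf_mult pfGr that)
      then have "pf D (\<lambda>X. G t X s * G t X s)" by (rule pf_mono) (use D in simp)
      then show ?thesis by (simp add: power2_eq_square)
    qed
    have "\<phi>2 s = Lam D y (\<lambda>X. \<Sum>t<q. (G t X s)^2)" by (simp add: phi2 E3)
    also have "\<dots> = (\<Sum>t<q. Lam D y (\<lambda>X. (G t X s)^2))" by (rule Lam_sum) (auto intro: sq)
    also have "\<dots> \<ge> 0" by (rule sum_nonneg) (use Lam_sq_nonneg[OF pfGr D(1) psd] in auto)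
    finally show ?thesis .
  qed
  have phi1_0: "\<phi>1 0 = 0"
  proof -
    have "(\<lambda>X. L1 X 0) = (\<lambda>X. \<Sum>k\<in>UNIV. peval (pdiff k p) a * (X$k - a$k))"
      by (rule ext) (simp add: E1 z_def mult_ac)
    then have "\<phi>1 0 = Lam D y (\<lambda>X. \<Sum>k\<in>UNIV. peval (pdiff k p) a * (X$k - a$k))" by (simp add: phi1)
    also have "\<dots> = (\<Sum>k\<in>UNIV. peval (pdiff k p) a * (Lam D y (\<lambda>X. X$k) - Lam D y (\<lambda>X. a$k)))"
      using D by (simp add: Lam_sum Lam_scale Lam_diff pf_scale pf_diff pf_coord pf_const)
    also have "\<dots> = 0" using D by (simp add: Lam_coord Lam_const y0 a_def)
    finally show ?thesis .
  qed
  have phi1_nn: "\<phi>1 s \<ge> 0" if "s \<ge> 0" for s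
  proof -
    have "\<phi>1 0 \<le> \<phi>1 s"
      by (rule deriv_nonneg_imp_mono[of 0 s \<phi>1 \<phi>2]) (use dphi1 phi2_nn that in auto)
    then show ?thesis using phi1_0 by simp
  qed
  have "\<phi> 0 \<le> \<phi> 1"
    by (rule deriv_nonneg_imp_mono[of 0 1 \<phi> \<phi>1]) (use dphi phi1_nn in auto)
  moreover have "\<phi> 1 = Lam D y (peval p)"
  proof -
    have "(\<lambda>X. h X 1) = peval p" by (rule ext) (simp add: h_def z_def)
    then show ?thesis by (simp add: phi)
  qed
  moreover have "\<phi> 0 = peval p a"
  proof -
    have "(\<lambda>X. h X 0) = (\<lambda>X. peval p a)" by (rule ext) (simp add: h_def z_def)
    then show ?thesis by (simp add: phi Lam_const y0)
  qed
  ultimately show ?thesis by (simp add: a_def)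
qed



lemma qf_sq:
  fixes v w :: "'i \<Rightarrow> real"
  shows "(\<Sum>a\<in>I. \<Sum>b\<in>I. v a * (w a * w b) * v b) = (\<Sum>a\<in>I. v a * w a)^2"
  by (simp add: power2_eq_square sum_distrib_left sum_distrib_right mult_ac)

lemma jensen_decomp:
  fixes u :: "'n::finite \<Rightarrow> real poly" and p :: "'n mpoly_coeffs"
  assumes uc: "\<And>j. convex_on UNIV (poly (u j))" and ud: "\<And>j. degree (u j) \<le> 2 * d j"
    and dj: "\<And>j. d j \<le> d0" and rd: "r < d0"
    and mp: "is_mpoly p" and dg: "mdeg_le p (2 * r)" and sc: "sos_convex p"
    and psdu: "\<And>j. psd_on {0..d j} (univ_moment_matrix (2 * d0) y j)"
    and psd: "psd_on (mono_set r) (moment_matrix (2 * d0) y)" and y0: "y (\<lambda>_. 0) = 1"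
  shows "Lam (2 * d0) y (\<lambda>x. (\<Sum>j\<in>UNIV. poly (u j) (x$j)) + peval p x)
         \<ge> (\<Sum>j\<in>UNIV. poly (u j) ((\<chi> k. y (unit_idx k))$j)) + peval p (\<chi> k. y (unit_idx k))"
proof -
  let ?D = "2 * d0"
  have D1: "1 \<le> ?D" using rd by simp
  have Dr: "2 * r \<le> ?D" using rd by simp
  have pfu: "pf ?D (\<lambda>x. poly (u j) (x$j))" for j
    by (rule pf_upoly) (use ud[of j] dj[of j] in simp)
  have pfp: "pf ?D (peval p)" by (rule pf_mono[OF pf_peval[OF mp dg] Dr])
  have "Lam ?D y (\<lambda>x. (\<Sum>j\<in>UNIV. poly (u j) (x$j)) + peval p x)
      = (\<Sum>j\<in>UNIV. Lam ?D y (\<lambda>x. poly (u j) (x$j))) + Lam ?D y (peval p)"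
    by (simp add: Lam_add Lam_sum pf_sum pfu pfp)
  moreover have "Lam ?D y (\<lambda>x. poly (u j) (x$j)) \<ge> poly (u j) ((\<chi> k. y (unit_idx k))$j)" for j
    using Lam_univ_jensen[OF uc ud _ D1 psdu y0, of j] dj[of j] by simp
  moreover have "Lam ?D y (peval p) \<ge> peval p (\<chi> k. y (unit_idx k))"
    by (rule Lam_sos_jensen[OF mp dg sc Dr D1 psd y0])
  ultimately show ?thesis by (simp add: add_mono sum_mono)
qed

theorem theorem5:
  fixes f :: "'n::finite mpoly_coeffs"
    and g :: "nat \<Rightarrow> 'n mpoly_coeffs"
    and u :: "nat \<Rightarrow> 'n \<Rightarrow> real poly"
    and p :: "nat \<Rightarrow> 'n mpoly_coeffs"
    and d :: "'n \<Rightarrow> nat" and r m d0 :: nat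
    and ybar :: "('n \<Rightarrow> nat) \<Rightarrow> real"
  assumes f_poly: "is_mpoly f"
    and g_poly: "\<forall>i\<in>{1..m}. is_mpoly (g i)"
    and f_convex: "convex_on UNIV (peval f)"
    and g_convex: "\<forall>i\<in>{1..m}. convex_on UNIV (peval (g i))"
    and u_deg: "\<forall>i\<in>{0..m}. \<forall>j. degree (u i j) \<le> 2 * d j"
    and u_convex: "\<forall>i\<in>{0..m}. \<forall>j. convex_on UNIV (poly (u i j))"
    and p_poly: "\<forall>i\<in>{0..m}. is_mpoly (p i) \<and> mdeg_le (p i) (2 * r) \<and> sos_convex (p i)"
    and f_decomp: "\<forall>x. peval f x = (\<Sum>j\<in>UNIV. poly (u 0 j) (x $ j)) + peval (p 0) x"
    and g_decomp: "\<forall>i\<in>{1..m}. \<forall>x. peval (g i) x = (\<Sum>j\<in>UNIV. poly (u i j) (x $ j)) + peval (p i) x"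
    and d0_def: "d0 = Max (range d)"
    and d0_gt: "d0 > r"
    and bdd: "\<exists>c. \<forall>x. (\<forall>i\<in>{1..m}. peval (g i) x \<le> 0) \<longrightarrow> c \<le> peval f x"
    and slater: "\<exists>xh. \<forall>i\<in>{1..m}. peval (g i) xh < 0"
    and opt: "spld_optimal d0 m d r f g ybar"
  shows "(\<forall>i\<in>{1..m}. peval (g i) (\<chi> j. ybar (unit_idx j)) \<le> 0) \<and>
         (\<forall>x. (\<forall>i\<in>{1..m}. peval (g i) x \<le> 0) \<longrightarrow>
              peval f (\<chi> j. ybar (unit_idx j)) \<le> peval f x)"
proof -
  let ?D = "2 * d0"
  let ?xb = "(\<chi> j. ybar (unit_idx j)) :: real^'n"
  have feas: "spld_feasible d0 m d r g ybar" using opt by (simp add: spld_optimal_def)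
  have optl: "\<And>y'. spld_feasible d0 m d r g y' \<Longrightarrow> lin_fun ?D f ybar \<le> lin_fun ?D f y'"
    using opt by (simp add: spld_optimal_def)
  have gle: "\<And>i. i \<in> {1..m} \<Longrightarrow> lin_fun ?D (g i) ybar \<le> 0"
    and psdu: "\<And>j. psd_on {0..d j} (univ_moment_matrix ?D ybar j)"
    and psd: "psd_on (mono_set r) (moment_matrix ?D ybar)"
    and y0: "ybar (\<lambda>_. 0) = 1"
    using feas by (auto simp: spld_feasible_def)
  have dj: "d j \<le> d0" for j unfolding d0_def by (rule Max_ge) auto
  have Dr: "2 * r \<le> ?D" using d0_gt by simp
  have pfdec: "pf ?D (\<lambda>x. (\<Sum>j\<in>UNIV. poly (u i j) (x $ j)) + peval (p i) x)" if "i \<in> {0..m}" for i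
  proof -
    have "pf ?D (\<lambda>x. poly (u i j) (x$j))" for j
    proof (rule pf_upoly)
      have "degree (u i j) \<le> 2 * d j" using u_deg that by auto
      then show "degree (u i j) \<le> 2 * d0" using dj[of j] by linarith
    qed
    moreover have "pf ?D (peval (p i))"
      using p_poly that by (auto intro: pf_mono[OF pf_peval Dr])
    ultimately show ?thesis by (intro pf_add pf_sum) auto
  qed
  have jens: "Lam ?D ybar (\<lambda>x. (\<Sum>j\<in>UNIV. poly (u i j) (x $ j)) + peval (p i) x)
      \<ge> (\<Sum>j\<in>UNIV. poly (u i j) (?xb $ j)) + peval (p i) ?xb" if "i \<in> {0..m}" for i
    using that u_convex u_deg p_poly
    by (intro jensen_decomp[where d=d and r=r, OF _ _ dj d0_gt _ _ _ psdu psd y0]) auto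
  have fe: "peval f = (\<lambda>x. (\<Sum>j\<in>UNIV. poly (u 0 j) (x $ j)) + peval (p 0) x)"
    using f_decomp by auto
  have fdeg: "mdeg_le f ?D" by (rule supp_bound[OF f_poly]) (use pfdec[of 0] fe in simp)
  have fL: "lin_fun ?D f ybar = Lam ?D ybar (peval f)" by (simp add: Lam_peval[OF f_poly fdeg])
  have fJ: "peval f ?xb \<le> lin_fun ?D f ybar"
    using jens[of 0] by (simp add: fL fe)
  have ge: "peval (g i) = (\<lambda>x. (\<Sum>j\<in>UNIV. poly (u i j) (x $ j)) + peval (p i) x)" if "i \<in> {1..m}" for i
    using g_decomp that by auto
  have gdeg: "mdeg_le (g i) ?D" if "i \<in> {1..m}" for i
    by (rule supp_bound) (use g_poly pfdec[of i] ge[OF that] that in auto)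
  have gJ: "peval (g i) ?xb \<le> lin_fun ?D (g i) ybar" if "i \<in> {1..m}" for i
  proof -
    have "lin_fun ?D (g i) ybar = Lam ?D ybar (peval (g i))"
      using g_poly that by (simp add: Lam_peval[OF _ gdeg[OF that]])
    then show ?thesis using jens[of i] that by (simp add: ge[OF that])
  qed
  have part1: "\<forall>i\<in>{1..m}. peval (g i) ?xb \<le> 0"
    using gJ gle by (meson order_trans)
  have part2: "peval f ?xb \<le> peval f x" if xf: "\<forall>i\<in>{1..m}. peval (g i) x \<le> 0" for x
  proof -
    define yx where "yx \<alpha> = monomial_val \<alpha> x" for \<alpha>
    have linx: "lin_fun ?D c yx = peval c x" if "is_mpoly c" "mdeg_le c ?D" for c
      using peval_eq_pfun[OF that] by (simp add: lin_fun_def pfun_def yx_def)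
    have "spld_feasible d0 m d r g yx"
      unfolding spld_feasible_def
    proof (intro conjI ballI allI)
      fix i assume "i \<in> {1..m}"
      then show "lin_fun ?D (g i) yx \<le> 0" using linx[OF _ gdeg] g_poly xf by auto
    next
      fix j
      show "psd_on {0..d j} (univ_moment_matrix ?D yx j)"
        unfolding psd_on_def
      proof
        fix v :: "nat \<Rightarrow> real"
        have "(\<Sum>a\<in>{0..d j}. \<Sum>b\<in>{0..d j}. v a * univ_moment_matrix ?D yx j a b * v b)
            = (\<Sum>a\<in>{0..d j}. \<Sum>b\<in>{0..d j}. v a * ((x$j)^a * (x$j)^b) * v b)"
          using dj[of j] by (intro sum.cong refl) (simp add: univ_mm_eq yx_def monomial_val_pow power_add)
        also have "\<dots> = (\<Sum>a\<in>{0..d j}. v a * (x$j)^a)^2" by (rule qf_sq)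
        finally show "0 \<le> (\<Sum>a\<in>{0..d j}. \<Sum>b\<in>{0..d j}. v a * univ_moment_matrix ?D yx j a b * v b)" by simp
      qed
    next
      show "psd_on (mono_set r) (moment_matrix ?D yx)"
        unfolding psd_on_def
      proof
        fix v :: "('n \<Rightarrow> nat) \<Rightarrow> real"
        have "(\<Sum>a\<in>mono_set r. \<Sum>b\<in>mono_set r. v a * moment_matrix ?D yx a b * v b)
            = (\<Sum>a\<in>mono_set r. \<Sum>b\<in>mono_set r. v a * (monomial_val a x * monomial_val b x) * v b)"
          using Dr by (intro sum.cong refl) (simp add: mm_eq yx_def monomial_val_add)
        also have "\<dots> = (\<Sum>a\<in>mono_set r. v a * monomial_val a x)^2" by (rule qf_sq)
        finally show "0 \<le> (\<Sum>a\<in>mono_set r. \<Sum>b\<in>mono_set r. v a * moment_matrix ?D yx a b * v b)" by simp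
      qed
    next
      show "yx (\<lambda>_. 0) = 1" by (simp add: yx_def)
    qed
    then have "lin_fun ?D f ybar \<le> lin_fun ?D f yx" by (rule optl)
    also have "\<dots> = peval f x" by (rule linx[OF f_poly fdeg])
    finally show ?thesis using fJ by simp
  qed
  show ?thesis using part1 part2 by blast
qed

end
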